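(* Let $n\in\mathbb{R}$. The Legendre operator $\mathscr{L}^n_n=\frac{1}{\sin\theta}\left[\frac{d}{d\theta}\left(\sin\theta\frac{d}{d\theta}\right)+n(n+1)\sin\theta-\frac{n^2}{\sin\theta}\right]$ on $(0,\pi)$ is limit-circle (at both endpoints $0$ and $\pi$) if and only if $n\in(-1,1)$.
   Context: $L^2_{\sin\theta}(a',b')$ denotes complex-valued functions square integrable on $(a',b')$ with respect to $\sin\theta\,d\theta$. A Sturm–Liouville operator $T$ on $(0,\pi)$ with weight $w=\sin\theta$ is limit-circle (LC) at $0$ if, for a given $\chi\in\mathbb{C}$, every solution of $Ty=\chi y$ lies in $L^2_{\sin\theta}(0,c)$ for some $c\in(0,\pi)$, and limit-point otherwise; similarly LC at $\pi$ if every solution lies in $L^2_{\sin\theta}(c,\pi)$; $T$ is LC if it is LC at both endpoints. (This property is independent of $\chi$.) *)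

theory Defs
  imports "HOL-Analysis.Analysis"
begin

definition L2_sin :: "(real \<Rightarrow> complex) \<Rightarrow> real \<Rightarrow> real \<Rightarrow> bool" where
  "L2_sin y a b \<longleftrightarrow> (\<lambda>t. (cmod (y t))\<^sup>2 * sin t) integrable_on {a<..<b}"

definition legendre_sol :: "real \<Rightarrow> complex \<Rightarrow> (real \<Rightarrow> complex) \<Rightarrow> bool" where
  "legendre_sol n chi y \<longleftrightarrow>
     (\<exists>y'. \<forall>t\<in>{0<..<pi}.
        (y has_vector_derivative y' t) (at t) \<and>
        ((\<lambda>s. complex_of_real (sin s) * y' s) has_vector_derivative
           ((chi * complex_of_real (sin t)
             - complex_of_real (n * (n + 1) * sin t - n\<^sup>2 / sin t)) * y t)) (at t))"

definition LC_at_0 :: "real \<Rightarrow> complex \<Rightarrow> bool" where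
  "LC_at_0 n chi \<longleftrightarrow>
     (\<forall>y. legendre_sol n chi y \<longrightarrow> (\<exists>c\<in>{0<..<pi}. L2_sin y 0 c))"

definition LC_at_pi :: "real \<Rightarrow> complex \<Rightarrow> bool" where
  "LC_at_pi n chi \<longleftrightarrow>
     (\<forall>y. legendre_sol n chi y \<longrightarrow> (\<exists>c\<in>{0<..<pi}. L2_sin y c pi))"

definition LC :: "real \<Rightarrow> complex \<Rightarrow> bool" where
  "LC n chi \<longleftrightarrow> LC_at_0 n chi \<and> LC_at_pi n chi"

end

theory Submission
  imports Defs
begin

lemma mv_compare:
  fixes f :: "real \<Rightarrow> complex" and G :: "real \<Rightarrow> real"
  assumes "a \<le> b"
    and df: "\<And>x. a \<le> x \<Longrightarrow> x \<le> b \<Longrightarrow> (f has_vector_derivative f' x) (at x)"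
    and dG: "\<And>x. a \<le> x \<Longrightarrow> x \<le> b \<Longrightarrow> (G has_real_derivative g x) (at x)"
    and bd: "\<And>x. a \<le> x \<Longrightarrow> x \<le> b \<Longrightarrow> norm (f' x) \<le> g x"
  shows "norm (f b - f a) \<le> G b - G a"
proof -
  define u where "u = f b - f a"
  define h where "h x = Re (cnj u * f x) - norm u * G x" for x
  have "h b \<le> h a"
  proof (rule DERIV_nonpos_imp_nonincreasing[OF \<open>a \<le> b\<close>])
    fix x assume x: "a \<le> x" "x \<le> b"
    have d1: "((\<lambda>x. cnj u * f x) has_vector_derivative (cnj u * f' x)) (at x)"
      by (intro has_vector_derivative_mult_right df x)
    have d2: "((\<lambda>x. Re (cnj u * f x)) has_vector_derivative Re (cnj u * f' x)) (at x)"
      using bounded_linear.has_vector_derivative[OF bounded_linear_Re d1] .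
    have d3: "((\<lambda>x. Re (cnj u * f x)) has_real_derivative Re (cnj u * f' x)) (at x)"
      using d2 by (simp add: has_real_derivative_iff_has_vector_derivative)
    have "(h has_real_derivative (Re (cnj u * f' x) - norm u * g x)) (at x)"
      unfolding h_def by (intro DERIV_diff d3 DERIV_cmult dG x)
    moreover have "Re (cnj u * f' x) - norm u * g x \<le> 0"
    proof -
      have "Re (cnj u * f' x) \<le> norm (cnj u * f' x)" by (rule complex_Re_le_cmod)
      also have "\<dots> = norm u * norm (f' x)" by (simp add: norm_mult)
      also have "\<dots> \<le> norm u * g x" by (intro mult_left_mono bd x) auto
      finally show ?thesis by simp
    qed
    ultimately show "\<exists>y. DERIV h x :> y \<and> y \<le> 0" by blast
  qed
  then have "Re (cnj u * (f b - f a)) \<le> norm u * (G b - G a)"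
    unfolding h_def by (simp add: algebra_simps)
  moreover have "Re (cnj u * u) = norm u * norm u"
    by (metis Re_complex_of_real complex_norm_square mult.commute power2_eq_square)
  ultimately have "norm u * norm u \<le> norm u * (G b - G a)" unfolding u_def by simp
  moreover have "G a \<le> G b"
  proof (rule DERIV_nonneg_imp_nondecreasing[OF \<open>a \<le> b\<close>])
    fix x assume x: "a \<le> x" "x \<le> b"
    have "0 \<le> g x" using bd[OF x] norm_ge_zero order_trans by blast
    then show "\<exists>y. DERIV G x :> y \<and> 0 \<le> y" using dG[OF x] by blast
  qed
  ultimately show ?thesis unfolding u_def[symmetric]
    by (cases "u = 0") (auto simp: mult_le_cancel_left)
qed



definition TT :: "real \<Rightarrow> real" where "TT t = tan (t/2)"

lemma half_facts:
  assumes "0 < t" "t < pi"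
  shows "0 < sin (t/2)" "0 < cos (t/2)"
  using assms by (auto intro!: sin_gt_zero cos_gt_zero_pi)

lemma TT_pos: "0 < t \<Longrightarrow> t < pi \<Longrightarrow> 0 < TT t"
  using half_facts[of t] by (simp add: TT_def tan_def)

lemma sin_TT: assumes "0 < t" "t < pi"
  shows "sin t = 2 * TT t / (1 + (TT t)\<^sup>2)"
proof -
  have c: "cos (t/2) > 0" using half_facts assms by auto
  have "sin t = sin (2 * (t/2))" by simp
  also have "\<dots> = 2 * sin (t/2) * cos (t/2)" by (rule sin_double)
  finally have st: "sin t = 2 * sin (t/2) * cos (t/2)" .
  have "1 + (TT t)\<^sup>2 = 1 / (cos (t/2))\<^sup>2"
    using c by (simp add: TT_def tan_def field_simps sin_cos_squared_add[of "t/2"] power2_eq_square)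
  then show ?thesis using c st by (simp add: TT_def tan_def field_simps power2_eq_square)
qed

lemma sin_le_2TT: assumes "0 < t" "t < pi" shows "sin t \<le> 2 * TT t"
proof -
  have p: "0 < TT t" using TT_pos assms by auto
  have "2 * TT t / (1 + (TT t)\<^sup>2) \<le> 2 * TT t / 1"
    using p by (intro divide_left_mono) (auto simp: add_pos_nonneg)
  then show ?thesis using sin_TT[OF assms] by simp
qed

lemma TT_mono: assumes "0 < t" "t \<le> u" "u < pi" shows "TT t \<le> TT u"
  using tan_monotone'[of "t/2" "u/2"] assms by (cases "t = u") (auto simp: TT_def)

lemma TT_le_1: assumes "0 < t" "t \<le> pi/2" shows "TT t \<le> 1"
proof -
  have "TT t \<le> TT (pi/2)" using assms by (intro TT_mono) auto
  also have "TT (pi/2) = 1" by (simp add: TT_def tan_45)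
  finally show ?thesis .
qed

lemma TT_le_sin: assumes "0 < t" "t \<le> pi/2" shows "TT t \<le> sin t"
proof -
  have "TT t \<le> 1" using TT_le_1 assms by auto
  moreover have "0 < TT t" using TT_pos assms by auto
  ultimately have "(TT t)\<^sup>2 \<le> 1" by (simp add: power_le_one)
  then have "TT t * (1 + (TT t)\<^sup>2) \<le> TT t * 2"
    using \<open>0 < TT t\<close> by (intro mult_left_mono) auto
  then have "TT t \<le> 2 * TT t / (1 + (TT t)\<^sup>2)"
    by (simp add: le_divide_eq add_pos_nonneg)
  then show ?thesis using sin_TT[of t] assms by simp
qed

lemma TT_deriv: assumes "0 < t" "t < pi"
  shows "(TT has_real_derivative (TT t / sin t)) (at t)"
proof -
  have c: "cos (t/2) > 0" and s: "sin (t/2) > 0" using half_facts assms by auto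
  have "((\<lambda>t. tan (t/2)) has_real_derivative (inverse ((cos (t/2))\<^sup>2) * (1/2))) (at t)"
    using c by (auto intro!: derivative_eq_intros DERIV_tan[THEN DERIV_chain2])
  moreover have "inverse ((cos (t/2))\<^sup>2) * (1/2) = TT t / sin t"
  proof -
    have "sin t = sin (2 * (t/2))" by simp
    also have "\<dots> = 2 * sin (t/2) * cos (t/2)" by (rule sin_double)
    finally show ?thesis using c s by (simp add: TT_def tan_def field_simps power2_eq_square)
  qed
  ultimately show ?thesis unfolding TT_def[abs_def] by simp
qed

lemma TT_powr_deriv: assumes "0 < t" "t < pi"
  shows "((\<lambda>t. TT t powr e) has_real_derivative (e * TT t powr e / sin t)) (at t)"
proof -
  have p: "TT t > 0" using TT_pos assms by auto
  have "((\<lambda>t. TT t powr e) has_real_derivative (TT t powr e * (0 * ln (TT t) + (TT t / sin t) * e / TT t))) (at t)"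
    by (rule DERIV_powr[OF TT_deriv[OF assms] p DERIV_const])
  then show ?thesis using p by (simp add: field_simps)
qed

lemma TT_ln_deriv: assumes "0 < t" "t < pi"
  shows "((\<lambda>t. ln (TT t)) has_real_derivative (1 / sin t)) (at t)"
proof -
  have p: "TT t > 0" using TT_pos assms by auto
  have "((\<lambda>t. ln (TT t)) has_real_derivative (inverse (TT t) * (TT t / sin t))) (at t)"
    by (rule DERIV_chain2[OF DERIV_ln[OF p] TT_deriv[OF assms]])
  then show ?thesis using p by simp
qed

lemma TT_cont: "continuous_on {0..<pi} TT"
proof -
  have "continuous_on {0..<pi} (\<lambda>t. tan (t/2))"
  proof (intro continuous_intros)
    show "\<forall>x\<in>{0..<pi}. cos (x/2) \<noteq> 0"
    proof
      fix x :: real assume "x \<in> {0..<pi}"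
      then have "- (pi/2) < x/2" "x/2 < pi/2" by auto
      then have "0 < cos (x/2)" by (intro cos_gt_zero_pi)
      then show "cos (x/2) \<noteq> 0" by simp
    qed
  qed simp
  then show ?thesis unfolding TT_def[abs_def] .
qed

lemma TT_0 [simp]: "TT 0 = 0" by (simp add: TT_def)



definition sol :: "real \<Rightarrow> complex \<Rightarrow> (real \<Rightarrow> complex) \<Rightarrow> (real \<Rightarrow> complex) \<Rightarrow> bool" where
  "sol m lam y z \<longleftrightarrow> (\<forall>t\<in>{0<..<pi}.
     (y has_vector_derivative (z t / of_real (sin t))) (at t) \<and>
     (z has_vector_derivative ((lam * of_real (sin t) + of_real (m\<^sup>2 / sin t)) * y t)) (at t))"

lemma sin_pos_open: "t \<in> {0<..<pi} \<Longrightarrow> 0 < sin t"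
  by (auto intro: sin_gt_zero)

lemma legendre_to_sol:
  assumes "legendre_sol n chi y"
  shows "\<exists>z. sol \<bar>n\<bar> (chi - of_real (n * (n + 1))) y z"
proof -
  from assms obtain y' where H: "\<forall>t\<in>{0<..<pi}.
        (y has_vector_derivative y' t) (at t) \<and>
        ((\<lambda>s. complex_of_real (sin s) * y' s) has_vector_derivative
           ((chi * complex_of_real (sin t)
             - complex_of_real (n * (n + 1) * sin t - n\<^sup>2 / sin t)) * y t)) (at t)"
    unfolding legendre_sol_def by blast
  define z where "z s = complex_of_real (sin s) * y' s" for s
  have "sol \<bar>n\<bar> (chi - of_real (n * (n + 1))) y z"
    unfolding sol_def
  proof
    fix t :: real assume t: "t \<in> {0<..<pi}"
    have sp: "sin t \<noteq> 0" using sin_pos_open[OF t] by simp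
    have e1: "z t / of_real (sin t) = y' t" using sp by (simp add: z_def)
    have e2: "(chi * complex_of_real (sin t) - complex_of_real (n * (n + 1) * sin t - n\<^sup>2 / sin t))
        = ((chi - of_real (n * (n + 1))) * of_real (sin t) + of_real (\<bar>n\<bar>\<^sup>2 / sin t))"
      by (simp add: algebra_simps)
    show "(y has_vector_derivative z t / of_real (sin t)) (at t) \<and>
          (z has_vector_derivative ((chi - of_real (n * (n + 1))) * of_real (sin t) + of_real (\<bar>n\<bar>\<^sup>2 / sin t)) * y t) (at t)"
    proof
      show "(y has_vector_derivative z t / of_real (sin t)) (at t)" using H t e1 by simp
      have "(z has_vector_derivative ((chi * complex_of_real (sin t)
             - complex_of_real (n * (n + 1) * sin t - n\<^sup>2 / sin t)) * y t)) (at t)"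
        using H t unfolding z_def[abs_def] by blast
      then show "(z has_vector_derivative ((chi - of_real (n * (n + 1))) * of_real (sin t) + of_real (\<bar>n\<bar>\<^sup>2 / sin t)) * y t) (at t)"
        by (simp only: e2)
    qed
  qed
  then show ?thesis by blast
qed

lemma sol_to_legendre:
  assumes "sol \<bar>n\<bar> (chi - of_real (n * (n + 1))) y z"
  shows "legendre_sol n chi y"
  unfolding legendre_sol_def
proof (intro exI ballI conjI)
  fix t :: real assume t: "t \<in> {0<..<pi}"
  have sp: "sin t \<noteq> 0" using sin_pos_open[OF t] by simp
  from assms t have d1: "(y has_vector_derivative (z t / of_real (sin t))) (at t)"
     and d2: "(z has_vector_derivative (((chi - of_real (n * (n + 1))) * of_real (sin t) + of_real (\<bar>n\<bar>\<^sup>2 / sin t)) * y t)) (at t)"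
    unfolding sol_def by auto
  show "(y has_vector_derivative (z t / of_real (sin t))) (at t)" by fact
  have e2: "(chi * complex_of_real (sin t) - complex_of_real (n * (n + 1) * sin t - n\<^sup>2 / sin t))
        = ((chi - of_real (n * (n + 1))) * of_real (sin t) + of_real (\<bar>n\<bar>\<^sup>2 / sin t))"
    by (simp add: algebra_simps)
  show "((\<lambda>s. complex_of_real (sin s) * (z s / of_real (sin s))) has_vector_derivative
           ((chi * complex_of_real (sin t)
             - complex_of_real (n * (n + 1) * sin t - n\<^sup>2 / sin t)) * y t)) (at t)"
    unfolding e2
  proof (rule has_vector_derivative_transform_within_open[OF d2 _ t])
    show "open {0<..<pi::real}" by simp
    fix s :: real assume "s \<in> {0<..<pi}"
    then have "sin s \<noteq> 0" using sin_pos_open by force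
    then show "z s = complex_of_real (sin s) * (z s / complex_of_real (sin s))" by simp
  qed
qed

lemma sol_reflect:
  assumes "sol m lam y z"
  shows "sol m lam (\<lambda>t. y (pi - t)) (\<lambda>t. - z (pi - t))"
  unfolding sol_def
proof
  fix t :: real assume t: "t \<in> {0<..<pi}"
  then have t': "pi - t \<in> {0<..<pi}" by auto
  note H = assms[unfolded sol_def, rule_format, OF t']
  have d1: "(y has_vector_derivative (z (pi - t) / of_real (sin (pi - t)))) (at (pi - t))"
     and d2: "(z has_vector_derivative ((lam * of_real (sin (pi - t)) + of_real (m\<^sup>2 / sin (pi - t))) * y (pi - t))) (at (pi - t))"
    using H by blast+
  have dr: "((\<lambda>t. pi - t) has_vector_derivative (-1)) (at t)"
    by (auto intro!: derivative_eq_intros simp: has_real_derivative_iff_has_vector_derivative[symmetric])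
  have "((y \<circ> (\<lambda>t. pi - t)) has_vector_derivative ((-1) *\<^sub>R (z (pi - t) / of_real (sin (pi - t))))) (at t)"
    by (rule vector_diff_chain_at[OF dr]) (use d1 in simp)
  then show "((\<lambda>t. y (pi - t)) has_vector_derivative (- z (pi - t) / of_real (sin t))) (at t) \<and>
        ((\<lambda>t. - z (pi - t)) has_vector_derivative ((lam * of_real (sin t) + of_real (m\<^sup>2 / sin t)) * y (pi - t))) (at t)"
  proof (intro conjI)
    assume "((y \<circ> (\<lambda>t. pi - t)) has_vector_derivative ((-1) *\<^sub>R (z (pi - t) / of_real (sin (pi - t))))) (at t)"
    then show "((\<lambda>t. y (pi - t)) has_vector_derivative (- z (pi - t) / of_real (sin t))) (at t)"
      by (simp add: o_def)
    have "((z \<circ> (\<lambda>t. pi - t)) has_vector_derivative ((-1) *\<^sub>R ((lam * of_real (sin (pi - t)) + of_real (m\<^sup>2 / sin (pi - t))) * y (pi - t)))) (at t)"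
      by (rule vector_diff_chain_at[OF dr]) (use d2 in simp)
    then have "((\<lambda>t. - (z \<circ> (\<lambda>t. pi - t)) t) has_vector_derivative - ((-1) *\<^sub>R ((lam * of_real (sin (pi - t)) + of_real (m\<^sup>2 / sin (pi - t))) * y (pi - t)))) (at t)"
      by (rule derivative_intros)
    then show "((\<lambda>t. - z (pi - t)) has_vector_derivative ((lam * of_real (sin t) + of_real (m\<^sup>2 / sin t)) * y (pi - t))) (at t)"
      by (simp add: o_def)
  qed
qed



lemma bootstrap:
  fixes U :: "real \<Rightarrow> real"
  assumes "a \<le> b" "continuous_on {a..b} U"
    and H: "\<And>M. (\<forall>t\<in>{a..b}. U t \<le> M) \<Longrightarrow> (\<forall>t\<in>{a..b}. U t \<le> K + M/2)"
  shows "\<forall>t\<in>{a..b}. U t \<le> 2 * K"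
proof -
  obtain x where x: "x \<in> {a..b}" "\<forall>y\<in>{a..b}. U y \<le> U x"
    using continuous_attains_sup[of "{a..b}" U] assms by auto
  have "U x \<le> K + U x / 2" using H[of "U x"] x by blast
  then have "U x \<le> 2 * K" by simp
  then show ?thesis using x by force
qed

lemma hvd_eq: "(f has_vector_derivative X) F \<Longrightarrow> X = Y \<Longrightarrow> (f has_vector_derivative Y) F" by simp

lemma alg_A: fixes P S M L Y Z :: complex assumes "S \<noteq> 0" "M \<noteq> 0"
  shows "(P * (M * Z / S + (L * S + M * M / S) * Y) + (- M * P / S) * (M * Y + Z)) / (2 * M) = L / (2 * M) * (S * P) * Y"
  using assms by (simp add: field_simps)

lemma alg_B: fixes P S M L Y Z :: complex assumes "S \<noteq> 0" "M \<noteq> 0"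
  shows "(P * (M * Z / S - (L * S + M * M / S) * Y) + (M * P / S) * (M * Y - Z)) / (2 * M) = - (L / (2 * M)) * (S * P) * Y"
  using assms by (simp add: field_simps)

lemma alg_R: fixes P Q M Y Z :: complex assumes "P * Q = 1" "M \<noteq> 0"
  shows "Y = P * (Q * (M * Y + Z) / (2 * M)) + Q * (P * (M * Y - Z) / (2 * M))"
proof -
  have "P * (Q * (M * Y + Z) / (2 * M)) + Q * (P * (M * Y - Z) / (2 * M)) = (P * Q) * (2 * M * Y) / (2 * M)"
    by (simp add: field_simps)
  also have "\<dots> = Y" using assms by simp
  finally show ?thesis by simp
qed

lemma sol_AB:
  assumes "sol m lam y z" "0 < m" "t \<in> {0<..<pi}"
  shows "((\<lambda>t. of_real (TT t powr (-m)) * (of_real m * y t + z t) / (2 * of_real m)) has_vector_derivative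
           (lam / (2 * of_real m) * of_real (sin t * TT t powr (-m)) * y t)) (at t)"
    and "((\<lambda>t. of_real (TT t powr m) * (of_real m * y t - z t) / (2 * of_real m)) has_vector_derivative
           (- (lam / (2 * of_real m)) * of_real (sin t * TT t powr m) * y t)) (at t)"
proof -
  have t: "0 < t" "t < pi" using assms(3) by auto
  have sp: "0 < sin t" using sin_pos_open assms(3) by blast
  from assms(1,3) have dy: "(y has_vector_derivative (z t / of_real (sin t))) (at t)"
     and dz: "(z has_vector_derivative ((lam * of_real (sin t) + of_real (m\<^sup>2 / sin t)) * y t)) (at t)"
    unfolding sol_def by auto
  have dP: "((\<lambda>t. of_real (TT t powr e)) has_vector_derivative of_real (e * TT t powr e / sin t)) (at t)" for e
    by (rule has_vector_derivative_of_real[OF TT_powr_deriv[OF t]])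
  have d1: "((\<lambda>t. of_real m * y t + z t) has_vector_derivative
       (of_real m * (z t / of_real (sin t)) + (lam * of_real (sin t) + of_real (m\<^sup>2 / sin t)) * y t)) (at t)"
    by (intro derivative_intros dy dz)
  have d2: "((\<lambda>t. of_real m * y t - z t) has_vector_derivative
       (of_real m * (z t / of_real (sin t)) - (lam * of_real (sin t) + of_real (m\<^sup>2 / sin t)) * y t)) (at t)"
    by (intro derivative_intros dy dz)
  have mn: "(of_real m :: complex) \<noteq> 0" using assms(2) by simp
  have sn: "(of_real (sin t) :: complex) \<noteq> 0" using sp by simp
  show "((\<lambda>t. of_real (TT t powr (-m)) * (of_real m * y t + z t) / (2 * of_real m)) has_vector_derivative
           (lam / (2 * of_real m) * of_real (sin t * TT t powr (-m)) * y t)) (at t)"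
    apply (rule hvd_eq[OF has_vector_derivative_divide[OF has_vector_derivative_mult[OF dP[of "-m"] d1], of "2 * of_real m"]])
    apply (simp only: of_real_mult of_real_divide of_real_minus of_real_power)
    using alg_A[OF sn mn] by (simp add: power2_eq_square)
  show "((\<lambda>t. of_real (TT t powr m) * (of_real m * y t - z t) / (2 * of_real m)) has_vector_derivative
           (- (lam / (2 * of_real m)) * of_real (sin t * TT t powr m) * y t)) (at t)"
    apply (rule hvd_eq[OF has_vector_derivative_divide[OF has_vector_derivative_mult[OF dP[of "m"] d2], of "2 * of_real m"]])
    apply (simp only: of_real_mult of_real_divide of_real_minus of_real_power)
    using alg_B[OF sn mn] by (simp add: power2_eq_square)
qed

lemma AB_recombine:
  fixes y z :: "real \<Rightarrow> complex"
  assumes "0 < m" "t \<in> {0<..<pi}"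
  shows "y t = of_real (TT t powr m) * (of_real (TT t powr (-m)) * (of_real m * y t + z t) / (2 * of_real m))
             + of_real (TT t powr (-m)) * (of_real (TT t powr m) * (of_real m * y t - z t) / (2 * of_real m))"
proof -
  have p: "TT t > 0" using TT_pos assms by auto
  have e: "TT t powr m * TT t powr (-m) = 1" using p by (simp add: powr_add[symmetric])
  have e': "(of_real (TT t powr m) :: complex) * of_real (TT t powr (-m)) = 1"
    by (simp only: of_real_mult[symmetric] e) simp
  have mn: "(of_real m :: complex) \<noteq> 0" using assms(1) by simp
  show ?thesis
    by (rule alg_R[OF e' mn])
qed



lemma sol_cont:
  assumes "sol m lam y z" "S \<subseteq> {0<..<pi}"
  shows "continuous_on S y" "continuous_on S z"
proof -
  have "\<forall>t\<in>S. isCont y t \<and> isCont z t"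
  proof
    fix t assume "t \<in> S"
    then have t: "t \<in> {0<..<pi}" using assms by auto
    then show "isCont y t \<and> isCont z t" using assms(1) unfolding sol_def
      by (auto intro: has_vector_derivative_continuous)
  qed
  then show "continuous_on S y" "continuous_on S z"
    by (auto intro!: continuous_at_imp_continuous_on)
qed

lemma hvd_cont_on:
  assumes "\<And>t. t \<in> S \<Longrightarrow> (f has_vector_derivative f' t) (at t)"
  shows "continuous_on S f"
  using assms by (auto intro!: continuous_at_imp_continuous_on intro: has_vector_derivative_continuous)

lemma TT_cont_open: "continuous_on S TT" if "S \<subseteq> {0<..<pi}"
proof -
  have "continuous_on {0<..<pi} TT"
    using TT_deriv by (auto intro!: continuous_at_imp_continuous_on DERIV_isCont)
  then show ?thesis using continuous_on_subset that by blast
qed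

lemma L2_from_bound:
  assumes c: "0 < c" "c \<le> pi/2" and m: "0 \<le> m" "m < 1"
    and yc: "continuous_on {0<..<c} y"
    and bd: "\<And>t. 0 < t \<Longrightarrow> t < c \<Longrightarrow> norm (y t) \<le> C * TT t powr (-m)"
  shows "L2_sin y 0 c"
proof -
  define e where "e = 2 - 2 * m"
  have e: "0 < e" using m by (simp add: e_def)
  define g where "g t = (4 * C\<^sup>2 / e) * (e * TT t powr e / sin t)" for t
  have "(g has_integral ((4 * C\<^sup>2 / e) * TT c powr e - (4 * C\<^sup>2 / e) * TT 0 powr e)) {0..c}"
  proof (rule fundamental_theorem_of_calculus_interior)
    show "0 \<le> c" using c by simp
    have "continuous_on {0..c} TT" using TT_cont by (rule continuous_on_subset) (use c in auto)
    moreover have "\<forall>x\<in>{0..c}. 0 \<le> TT x \<and> (TT x = 0 \<longrightarrow> 0 < e)"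
    proof
      fix x assume "x \<in> {0..c}"
      then show "0 \<le> TT x \<and> (TT x = 0 \<longrightarrow> 0 < e)" using e TT_pos[of x] c
        by (cases "x = 0") (auto simp: less_imp_le)
    qed
    ultimately show "continuous_on {0..c} (\<lambda>t. (4 * C\<^sup>2 / e) * TT t powr e)"
      by (intro continuous_intros continuous_on_powr') auto
    fix x assume x: "x \<in> {0<..<c}"
    then have "0 < x" "x < pi" using c by auto
    then show "((\<lambda>t. (4 * C\<^sup>2 / e) * TT t powr e) has_vector_derivative g x) (at x)"
      unfolding g_def has_real_derivative_iff_has_vector_derivative[symmetric]
      by (intro DERIV_cmult TT_powr_deriv)
  qed
  then have "g integrable_on {0..c}" by blast
  then have gi: "g integrable_on {0<..<c}" by (simp add: integrable_on_open_interval_real)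
  have meas: "(\<lambda>t. (cmod (y t))\<^sup>2 * sin t) \<in> borel_measurable (lebesgue_on {0<..<c})"
    by (intro continuous_imp_measurable_on_sets_lebesgue continuous_intros yc) auto
  show ?thesis unfolding L2_sin_def
  proof (rule measurable_bounded_by_integrable_imp_integrable[OF meas gi])
    show "{0<..<c} \<in> sets lebesgue" by simp
    fix t assume t: "t \<in> {0<..<c}"
    then have t0: "0 < t" "t < pi" "t \<le> pi/2" using c by auto
    have sp: "0 < sin t" using t0 by (intro sin_gt_zero) auto
    have Tp: "0 < TT t" using TT_pos t0 by auto
    have s2: "sin t \<le> 2 * TT t" using sin_le_2TT t0 by auto
    have "norm (y t) \<le> C * TT t powr (-m)" using bd t by auto
    then have "(norm (y t))\<^sup>2 \<le> (C * TT t powr (-m))\<^sup>2"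
      by (intro power_mono) auto
    also have "\<dots> = C\<^sup>2 * TT t powr (-2 * m)"
      by (simp add: power_mult_distrib powr_powr[symmetric] power2_eq_square powr_add[symmetric])
    finally have y2: "(norm (y t))\<^sup>2 \<le> C\<^sup>2 * TT t powr (-2 * m)" .
    have key: "sin t * TT t powr (-2 * m) \<le> 4 * TT t powr e / sin t"
    proof -
      have "sin t * sin t \<le> (2 * TT t) * (2 * TT t)" using s2 sp by (intro mult_mono) auto
      then have "sin t * sin t * TT t powr (-2 * m) \<le> 4 * (TT t * TT t) * TT t powr (-2 * m)"
        by (intro mult_right_mono) auto
      moreover have "TT t * TT t * TT t powr (-2 * m) = TT t powr e"
      proof -
        have "TT t powr e = TT t powr 2 * TT t powr (-2*m)"
          unfolding e_def using powr_add[of "TT t" 2 "-2*m"] by simp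
        moreover have "TT t powr 2 = TT t * TT t" using Tp by (simp add: powr_numeral power2_eq_square)
        ultimately show ?thesis by simp
      qed
      ultimately have "sin t * sin t * TT t powr (-2 * m) \<le> 4 * TT t powr e" by (simp add: mult.assoc)
      then show ?thesis using sp by (simp add: field_simps)
    qed
    have "norm ((cmod (y t))\<^sup>2 * sin t) = (cmod (y t))\<^sup>2 * sin t" using sp by simp
    also have "\<dots> \<le> C\<^sup>2 * TT t powr (-2 * m) * sin t" using y2 sp by (intro mult_right_mono) auto
    also have "\<dots> = C\<^sup>2 * (sin t * TT t powr (-2 * m))" by simp
    also have "\<dots> \<le> C\<^sup>2 * (4 * TT t powr e / sin t)" using key by (intro mult_left_mono) auto
    also have "\<dots> = g t" using e by (simp add: g_def)
    finally show "norm ((cmod (y t))\<^sup>2 * sin t) \<le> g t" .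
  qed
qed



lemma key_ineq:
  assumes "0 < t" "t < pi"
  shows "sin t * TT t powr (-2 * m) \<le> 4 * TT t powr (2 - 2 * m) / sin t"
proof -
  have sp: "0 < sin t" using assms by (intro sin_gt_zero) auto
  have Tp: "0 < TT t" using TT_pos assms by auto
  have s2: "sin t \<le> 2 * TT t" using sin_le_2TT assms by auto
  have "sin t * sin t \<le> (2 * TT t) * (2 * TT t)" using s2 sp by (intro mult_mono) auto
  then have "sin t * sin t * TT t powr (-2 * m) \<le> 4 * (TT t * TT t) * TT t powr (-2 * m)"
    by (intro mult_right_mono) auto
  moreover have "TT t * TT t * TT t powr (-2 * m) = TT t powr (2 - 2 * m)"
  proof -
    have "TT t powr (2 - 2 * m) = TT t powr 2 * TT t powr (-2*m)"
      using powr_add[of "TT t" 2 "-2*m"] by simp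
    moreover have "TT t powr 2 = TT t * TT t" using Tp by (simp add: powr_numeral power2_eq_square)
    ultimately show ?thesis by simp
  qed
  ultimately have "sin t * sin t * TT t powr (-2 * m) \<le> 4 * TT t powr (2 - 2 * m)" by (simp add: mult.assoc)
  then show ?thesis using sp by (simp add: field_simps)
qed

lemma TT_tendsto_0: "(TT \<longlongrightarrow> 0) (at_right 0)"
proof -
  have "((\<lambda>c. tan (c / 2)) \<longlongrightarrow> tan (0 / 2)) (at_right 0)"
    by (intro tendsto_intros) auto
  then show ?thesis unfolding TT_def[abs_def] by simp
qed

lemma choose_small:
  assumes "0 < e" "m < (1::real)"
  shows "\<exists>c. 0 < c \<and> c < pi/2 \<and> kk * c + kk * 2 * TT c powr e / (1 - m) < 1/2"
proof -
  have ev0: "eventually (\<lambda>c. 0 \<le> TT c) (at_right 0)"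
    unfolding eventually_at_right_field
    by (rule exI[of _ pi]) (auto intro: less_imp_le TT_pos)
  have "((\<lambda>c. TT c powr e) \<longlongrightarrow> 0) (at_right 0)"
    by (rule tendsto_zero_powrI[OF TT_tendsto_0 tendsto_const ev0 assms(1)])
  then have "((\<lambda>c. kk * c + kk * 2 * TT c powr e / (1 - m)) \<longlongrightarrow> kk * 0 + kk * 2 * 0 / (1 - m)) (at_right 0)"
    using assms(2) by (intro tendsto_intros) (auto intro: tendsto_ident_at)
  then have ev1: "eventually (\<lambda>c. kk * c + kk * 2 * TT c powr e / (1 - m) < 1/2) (at_right 0)"
    by (intro order_tendstoD) auto
  have ev2: "eventually (\<lambda>c. 0 < c \<and> c < pi/2) (at_right (0::real))"
    unfolding eventually_at_right_field by (rule exI[of _ "pi/2"]) auto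
  from eventually_conj[OF ev1 ev2] obtain b where b: "b > 0"
    "\<And>y. y > 0 \<Longrightarrow> y < b \<Longrightarrow> kk * y + kk * 2 * TT y powr e / (1 - m) < 1/2 \<and> 0 < y \<and> y < pi/2"
    unfolding eventually_at_right_field by blast
  have "kk * (b/2) + kk * 2 * TT (b/2) powr e / (1 - m) < 1/2 \<and> 0 < b/2 \<and> b/2 < pi/2"
    using b(2)[of "b/2"] b(1) by auto
  then show ?thesis by blast
qed

lemma upper_pos:
  assumes sol: "sol m lam y z" and m: "0 < m" "m < 1"
  shows "\<exists>c\<in>{0<..<pi}. L2_sin y 0 c"
proof -
  define k where "k = lam / (2 * of_real m)"
  define kk where "kk = norm k"
  define e where "e = 2 - 2 * m"
  have e: "0 < e" using m by (simp add: e_def)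
  define A where "A = (\<lambda>t. of_real (TT t powr (-m)) * (of_real m * y t + z t) / (2 * of_real m))"
  define B where "B = (\<lambda>t. of_real (TT t powr m) * (of_real m * y t - z t) / (2 * of_real m))"
  have dA: "(A has_vector_derivative (k * of_real (sin t * TT t powr (-m)) * y t)) (at t)"
    if "t \<in> {0<..<pi}" for t
    using sol_AB(1)[OF sol m(1) that] unfolding A_def k_def .
  have dB: "(B has_vector_derivative (- k * of_real (sin t * TT t powr m) * y t)) (at t)"
    if "t \<in> {0<..<pi}" for t
    using sol_AB(2)[OF sol m(1) that] unfolding B_def k_def .
  obtain c where c: "0 < c" "c < pi/2" "kk * c + kk * 2 * TT c powr e / (1 - m) < 1/2"
    using choose_small[OF e m(2)] by blast
  define K0 where "K0 = norm (A c) + norm (B c)"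
  have main: "norm (y th) * TT th powr m \<le> 2 * K0" if th: "0 < th" "th \<le> c" for th
  proof -
    define U where "U t = norm (y t) * TT t powr m" for t
    have "\<forall>t\<in>{th..c}. U t \<le> 2 * K0"
    proof (rule bootstrap)
      show "th \<le> c" by fact
      have sub: "{th..c} \<subseteq> {0<..<pi}" using th c by auto
      have "\<forall>x\<in>{th..c}. TT x \<noteq> 0" using sub TT_pos by force
      then show "continuous_on {th..c} U" unfolding U_def
        by (intro continuous_intros sol_cont[OF sol sub] TT_cont_open[OF sub]) auto
      fix M assume HM: "\<forall>t\<in>{th..c}. U t \<le> M"
      have "U th \<le> M" using HM th by auto
      moreover have "0 \<le> U th" by (simp add: U_def)
      ultimately have M0: "0 \<le> M" by linarith
      show "\<forall>t\<in>{th..c}. U t \<le> K0 + M / 2"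
      proof
        fix t assume t: "t \<in> {th..c}"
        then have t0: "0 < t" "t < pi" "t \<le> pi/2" "t \<le> c" using th c by auto
        have nB: "norm (B c - B t) \<le> kk * M * c - kk * M * t"
        proof (rule mv_compare[where g = "\<lambda>_. kk * M"])
          show "t \<le> c" by fact
          fix u assume u: "t \<le> u" "u \<le> c"
          then have u0: "u \<in> {0<..<pi}" "u \<in> {th..c}" using t0 c t by auto
          show "(B has_vector_derivative (- k * of_real (sin u * TT u powr m) * y u)) (at u)"
            by (rule dB[OF u0(1)])
          show "((\<lambda>u. kk * M * u) has_real_derivative kk * M) (at u)"
            by (auto intro!: derivative_eq_intros)
          have sp: "0 < sin u" "sin u \<le> 1" using sin_pos_open[OF u0(1)] by auto
          have "norm (- k * of_real (sin u * TT u powr m) * y u) = kk * (sin u * U u)"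
            using sp by (simp add: kk_def U_def norm_mult abs_mult)
          also have "\<dots> \<le> kk * (1 * M)"
            using sp HM u0(2) by (intro mult_left_mono mult_mono) (auto simp: kk_def U_def)
          finally show "norm (- k * of_real (sin u * TT u powr m) * y u) \<le> kk * M" by simp
        qed
        define G where "G u = kk * M * 4 / e * TT u powr e" for u
        have nA: "norm (A c - A t) \<le> G c - G t"
        proof (rule mv_compare[where g = "\<lambda>u. kk * M * 4 / e * (e * TT u powr e / sin u)"])
          show "t \<le> c" by fact
          fix u assume u: "t \<le> u" "u \<le> c"
          then have u0: "u \<in> {0<..<pi}" "u \<in> {th..c}" using t0 c t by auto
          show "(A has_vector_derivative (k * of_real (sin u * TT u powr (-m)) * y u)) (at u)"
            by (rule dA[OF u0(1)])
          show "(G has_real_derivative kk * M * 4 / e * (e * TT u powr e / sin u)) (at u)"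
            unfolding G_def[abs_def] using u0 by (intro DERIV_cmult TT_powr_deriv) auto
          have sp: "0 < sin u" using sin_pos_open[OF u0(1)] by auto
          have Tp: "0 < TT u" using TT_pos u0 by auto
          have yU: "norm (y u) * TT u powr (-m) = U u * TT u powr (-2 * m)"
            using Tp by (simp add: U_def mult.assoc powr_add[symmetric])
          have "norm (k * of_real (sin u * TT u powr (-m)) * y u) = kk * sin u * (norm (y u) * TT u powr (-m))"
            using sp by (simp add: kk_def norm_mult abs_mult)
          also have "\<dots> = kk * (sin u * TT u powr (-2 * m)) * U u" unfolding yU by simp
          also have "\<dots> \<le> kk * (sin u * TT u powr (-2 * m)) * M"
            using HM u0(2) sp by (intro mult_left_mono) (auto simp: kk_def)
          also have "\<dots> \<le> kk * (4 * TT u powr e / sin u) * M"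
            using key_ineq[of u m] u0 M0 unfolding e_def by (intro mult_right_mono mult_left_mono) (auto simp: kk_def)
          also have "\<dots> = kk * M * 4 / e * (e * TT u powr e / sin u)" using e by simp
          finally show "norm (k * of_real (sin u * TT u powr (-m)) * y u) \<le> kk * M * 4 / e * (e * TT u powr e / sin u)" .
        qed
        have Gt: "0 \<le> G t" unfolding G_def using M0 e by (auto simp: kk_def)
        have "G c = kk * M * (2 * TT c powr e / (1 - m))" unfolding G_def e_def using m
          by (simp add: field_simps)
        then have nA': "norm (A t) \<le> norm (A c) + kk * M * (2 * TT c powr e / (1 - m))"
          using nA Gt norm_triangle_ineq3[of "A c" "A t"] by (smt (verit) norm_minus_commute norm_triangle_ineq2)
        have nB': "norm (B t) \<le> norm (B c) + kk * M * c"
          using nB t0 M0 norm_triangle_ineq3[of "B c" "B t"]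
          by (smt (verit) kk_def mult_nonneg_nonneg norm_ge_zero norm_minus_commute norm_triangle_ineq2)
        have Tp: "0 < TT t" using TT_pos t0 by auto
        have T1: "TT t powr m * TT t powr m \<le> 1"
        proof -
          have "TT t powr m \<le> 1 powr m" using TT_le_1[of t] t0 Tp m by (intro powr_mono2) auto
          then have "TT t powr m \<le> 1" by simp
          then show ?thesis using mult_le_one[of "TT t powr m" "TT t powr m"] by simp
        qed
        have yrec: "y t = of_real (TT t powr m) * A t + of_real (TT t powr (-m)) * B t"
          using AB_recombine[OF m(1), of t y z] t0 unfolding A_def B_def by simp
        have "of_real (TT t powr m) * y t = of_real (TT t powr m * TT t powr m) * A t + B t"
        proof -
          have "TT t powr m * TT t powr (-m) = 1" using Tp by (simp add: powr_add[symmetric])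
          then have "(of_real (TT t powr m) :: complex) * of_real (TT t powr (-m)) = 1"
            by (simp only: of_real_mult[symmetric]) simp
          then show ?thesis unfolding yrec by (simp add: algebra_simps)
        qed
        moreover have "U t = norm (of_real (TT t powr m) * y t)"
          unfolding U_def by (simp add: norm_mult mult.commute)
        ultimately have "U t = norm (of_real (TT t powr m * TT t powr m) * A t + B t)"
          by simp
        also have "\<dots> \<le> (TT t powr m * TT t powr m) * norm (A t) + norm (B t)"
          by (rule order_trans[OF norm_triangle_ineq]) (simp add: norm_mult)
        also have "\<dots> \<le> norm (A t) + norm (B t)"
          using T1 by (simp add: mult_left_le_one_le)
        also have "\<dots> \<le> K0 + M * (kk * c + kk * 2 * TT c powr e / (1 - m))"
          using nA' nB' unfolding K0_def by (simp add: algebra_simps)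
        also have "\<dots> \<le> K0 + M * (1/2)"
          using c(3) M0 by (intro add_left_mono mult_left_mono) auto
        finally show "U t \<le> K0 + M / 2" by simp
      qed
    qed
    then show ?thesis using th by (auto simp: U_def)
  qed
  show ?thesis
  proof (intro bexI)
    show "c \<in> {0<..<pi}" using c by auto
    show "L2_sin y 0 c"
    proof (rule L2_from_bound[where m = m and C = "2 * K0"])
      show "0 < c" "c \<le> pi/2" "0 \<le> m" "m < 1" using c m by auto
      show "continuous_on {0<..<c} y" by (rule sol_cont[OF sol]) (use c in auto)
      fix t assume t: "0 < t" "t < c"
      have Tp: "0 < TT t" using TT_pos t c by auto
      have "norm (y t) * TT t powr m \<le> 2 * K0" using main t by auto
      then have "norm (y t) \<le> 2 * K0 / TT t powr m" using Tp by (simp add: field_simps)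
      then show "norm (y t) \<le> 2 * K0 * TT t powr (-m)" using Tp by (simp add: powr_minus divide_inverse)
    qed
  qed
qed



lemma log_bound:
  assumes "0 < t" "t \<le> pi/2"
  shows "1 + \<bar>ln (TT t)\<bar> \<le> 5 * TT t powr (-(1/4))"
    and "sin t * (1 + \<bar>ln (TT t)\<bar>)\<^sup>2 \<le> 50"
proof -
  have t: "0 < t" "t < pi" using assms by auto
  have Tp: "0 < TT t" using TT_pos t by auto
  have T1: "TT t \<le> 1" using TT_le_1 assms by auto
  define X where "X = TT t powr (-(1/4))"
  have Xp: "0 < X" using Tp by (simp add: X_def)
  have q: "TT t powr (1/4) \<le> 1"
  proof -
    have "TT t powr (1/4) \<le> 1 powr (1/4)" using Tp T1 by (intro powr_mono2) auto
    then show ?thesis by simp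
  qed
  have X1: "1 \<le> X"
  proof -
    have "X * TT t powr (1/4) = 1" unfolding X_def using Tp powr_add[of "TT t" "-(1/4)" "1/4"] by simp
    moreover have "0 < TT t powr (1/4)" using Tp by simp
    moreover have "X * TT t powr (1/4) \<le> X" using mult_left_mono[OF q, of X] Xp by simp
    ultimately show ?thesis by simp
  qed
  have lnX: "ln X = -(1/4) * ln (TT t)" using Tp unfolding X_def by (simp add: ln_powr)
  have lnT: "ln (TT t) \<le> 0" using Tp T1 by simp
  have "ln X \<le> X - 1" using Xp by (rule ln_le_minus_one)
  then have absL: "\<bar>ln (TT t)\<bar> \<le> 4 * X - 4" using lnX lnT by linarith
  then have b1': "1 + \<bar>ln (TT t)\<bar> \<le> 5 * X" using X1 by linarith
  then show "1 + \<bar>ln (TT t)\<bar> \<le> 5 * TT t powr (-(1/4))" unfolding X_def .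
  have "(1 + \<bar>ln (TT t)\<bar>)\<^sup>2 \<le> (5 * X)\<^sup>2" using b1'
    by (intro power_mono) auto
  also have "\<dots> = 25 * (X * X)" by (simp add: power2_eq_square)
  also have "X * X = TT t powr (-(1/2))"
    unfolding X_def using powr_add[of "TT t" "-(1/4)" "-(1/4)"] by simp
  finally have sq: "(1 + \<bar>ln (TT t)\<bar>)\<^sup>2 \<le> 25 * TT t powr (-(1/2))" .
  have s2: "sin t \<le> 2 * TT t" using sin_le_2TT t by auto
  have sp: "0 < sin t" using t by (intro sin_gt_zero) auto
  have "sin t * (1 + \<bar>ln (TT t)\<bar>)\<^sup>2 \<le> (2 * TT t) * (25 * TT t powr (-(1/2)))"
    using s2 sq sp by (intro mult_mono) auto
  also have "\<dots> = 50 * (TT t * TT t powr (-(1/2)))" by simp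
  also have "TT t * TT t powr (-(1/2)) = TT t powr (1/2)"
    using powr_add[of "TT t" 1 "-(1/2)"] Tp by simp
  also have "50 * TT t powr (1/2) \<le> 50 * 1 powr (1/2)" using Tp T1 by (intro mult_left_mono powr_mono2) auto
  finally show "sin t * (1 + \<bar>ln (TT t)\<bar>)\<^sup>2 \<le> 50" by simp
qed

lemma sol0_AB:
  assumes "sol 0 lam y z" "t \<in> {0<..<pi}"
  shows "((\<lambda>t. y t - z t * of_real (ln (TT t))) has_vector_derivative
           (- lam * of_real (sin t * ln (TT t)) * y t)) (at t)"
    and "(z has_vector_derivative (lam * of_real (sin t) * y t)) (at t)"
proof -
  have t: "0 < t" "t < pi" using assms(2) by auto
  have sp: "0 < sin t" using sin_pos_open assms(2) by blast
  from assms have dy: "(y has_vector_derivative (z t / of_real (sin t))) (at t)"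
     and dz: "(z has_vector_derivative ((lam * of_real (sin t) + of_real (0\<^sup>2 / sin t)) * y t)) (at t)"
    unfolding sol_def by auto
  show "(z has_vector_derivative (lam * of_real (sin t) * y t)) (at t)" using dz by simp
  have dL: "((\<lambda>t. of_real (ln (TT t))) has_vector_derivative of_real (1 / sin t)) (at t)"
    by (rule has_vector_derivative_of_real[OF TT_ln_deriv[OF t]])
  have sn: "(of_real (sin t) :: complex) \<noteq> 0" using sp by simp
  show "((\<lambda>t. y t - z t * of_real (ln (TT t))) has_vector_derivative
           (- lam * of_real (sin t * ln (TT t)) * y t)) (at t)"
    apply (rule hvd_eq[OF has_vector_derivative_diff[OF dy has_vector_derivative_mult[OF dz dL]]])
    using sn by (simp add: field_simps)
qed

lemma upper_zero:
  assumes sol: "sol 0 lam y z"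
  shows "\<exists>c\<in>{0<..<pi}. L2_sin y 0 c"
proof -
  define kk where "kk = norm lam"
  define L :: "real \<Rightarrow> complex" where "L t = of_real (ln (TT t))" for t
  define A where "A = (\<lambda>t. y t - z t * L t)"
  have dA: "(A has_vector_derivative (- lam * of_real (sin t * ln (TT t)) * y t)) (at t)"
    if "t \<in> {0<..<pi}" for t
    using sol0_AB(1)[OF sol that] unfolding A_def L_def .
  have dB: "(z has_vector_derivative (lam * of_real (sin t) * y t)) (at t)"
    if "t \<in> {0<..<pi}" for t
    using sol0_AB(2)[OF sol that] .
  define c where "c = 1 / (200 * kk + 1)"
  have c: "0 < c" "c \<le> 1" "c < pi/2" "100 * kk * c \<le> 1/2"
  proof -
    have "0 < 200 * kk + 1" by (simp add: kk_def add_nonneg_pos)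
    then show "0 < c" "c \<le> 1" unfolding c_def by (auto simp: kk_def)
    then show "c < pi/2" using pi_gt3 by linarith
    have "100 * kk * c = (100 * kk) / (200 * kk + 1)" by (simp add: c_def)
    also have "\<dots> \<le> 1/2"
    proof -
      have p: "0 < 200 * kk + 1" by (simp add: kk_def add_nonneg_pos)
      show ?thesis using p by (simp add: pos_divide_le_eq)
    qed
    finally show "100 * kk * c \<le> 1/2" .
  qed
  define K0 where "K0 = norm (A c) + norm (z c)"
  have main: "norm (A th) + norm (z th) \<le> 2 * K0" if th: "0 < th" "th \<le> c" for th
  proof -
    define U where "U t = norm (A t) + norm (z t)" for t
    have "\<forall>t\<in>{th..c}. U t \<le> 2 * K0"
    proof (rule bootstrap)
      show "th \<le> c" by fact
      have sub: "{th..c} \<subseteq> {0<..<pi}" using th c by auto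
      have cA: "continuous_on {th..c} A"
        by (rule hvd_cont_on[of _ A "\<lambda>t. - lam * of_real (sin t * ln (TT t)) * y t"]) (use dA sub in auto)
      have cB: "continuous_on {th..c} z"
        by (rule hvd_cont_on[of _ z "\<lambda>t. lam * of_real (sin t) * y t"]) (use dB sub in auto)
      show "continuous_on {th..c} U" unfolding U_def
        by (intro continuous_intros cA cB)
      fix M assume HM: "\<forall>t\<in>{th..c}. U t \<le> M"
      have "U th \<le> M" using HM th by auto
      moreover have "0 \<le> U th" by (simp add: U_def)
      ultimately have M0: "0 \<le> M" by linarith
      have ybd: "norm (y u) \<le> M * (1 + \<bar>ln (TT u)\<bar>)" if u: "u \<in> {th..c}" for u
      proof -
        have "y u = A u + z u * L u" by (simp add: A_def)
        then have "norm (y u) \<le> norm (A u) + norm (z u) * \<bar>ln (TT u)\<bar>"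
          by (metis L_def norm_mult norm_of_real norm_triangle_ineq)
        also have "\<dots> \<le> U u * (1 + \<bar>ln (TT u)\<bar>)"
          by (simp add: U_def algebra_simps mult_left_mono)
        also have "\<dots> \<le> M * (1 + \<bar>ln (TT u)\<bar>)" using HM u by (intro mult_right_mono) auto
        finally show ?thesis .
      qed
      show "\<forall>t\<in>{th..c}. U t \<le> K0 + M / 2"
      proof
        fix t assume t: "t \<in> {th..c}"
        then have t0: "0 < t" "t < pi" "t \<le> pi/2" "t \<le> c" using th c by auto
        have nB: "norm (z c - z t) \<le> kk * 50 * M * c - kk * 50 * M * t"
        proof (rule mv_compare[where g = "\<lambda>_. kk * 50 * M"])
          show "t \<le> c" by fact
          fix u assume u: "t \<le> u" "u \<le> c"
          then have u0: "u \<in> {0<..<pi}" "u \<in> {th..c}" "0 < u" "u \<le> pi/2" using t0 c t by auto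
          show "(z has_vector_derivative (lam * of_real (sin u) * y u)) (at u)"
            by (rule dB[OF u0(1)])
          show "((\<lambda>u. kk * 50 * M * u) has_real_derivative kk * 50 * M) (at u)"
            by (auto intro!: derivative_eq_intros)
          have sp: "0 < sin u" using sin_pos_open[OF u0(1)] by auto
          have l1: "1 \<le> 1 + \<bar>ln (TT u)\<bar>" by simp
          have "1 * (1 + \<bar>ln (TT u)\<bar>) \<le> (1 + \<bar>ln (TT u)\<bar>) * (1 + \<bar>ln (TT u)\<bar>)"
            using l1 by (intro mult_right_mono) auto
          then have "sin u * (1 + \<bar>ln (TT u)\<bar>) \<le> sin u * (1 + \<bar>ln (TT u)\<bar>)\<^sup>2"
            using sp by (simp add: power2_eq_square mult_left_mono)
          also have "\<dots> \<le> 50" using log_bound(2)[OF u0(3,4)] .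
          finally have sb: "sin u * (1 + \<bar>ln (TT u)\<bar>) \<le> 50" .
          have "norm (lam * of_real (sin u) * y u) = kk * sin u * norm (y u)"
            using sp by (simp add: kk_def norm_mult)
          also have "\<dots> \<le> kk * sin u * (M * (1 + \<bar>ln (TT u)\<bar>))"
            using ybd[OF u0(2)] sp by (intro mult_left_mono) (auto simp: kk_def)
          also have "\<dots> = kk * M * (sin u * (1 + \<bar>ln (TT u)\<bar>))" by simp
          also have "\<dots> \<le> kk * M * 50" using sb M0 by (intro mult_left_mono) (auto simp: kk_def)
          finally show "norm (lam * of_real (sin u) * y u) \<le> kk * 50 * M" by simp
        qed
        have nA: "norm (A c - A t) \<le> kk * 50 * M * c - kk * 50 * M * t"
        proof (rule mv_compare[where g = "\<lambda>_. kk * 50 * M"])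
          show "t \<le> c" by fact
          fix u assume u: "t \<le> u" "u \<le> c"
          then have u0: "u \<in> {0<..<pi}" "u \<in> {th..c}" "0 < u" "u \<le> pi/2" using t0 c t by auto
          show "(A has_vector_derivative (- lam * of_real (sin u * ln (TT u)) * y u)) (at u)"
            by (rule dA[OF u0(1)])
          show "((\<lambda>u. kk * 50 * M * u) has_real_derivative kk * 50 * M) (at u)"
            by (auto intro!: derivative_eq_intros)
          have sp: "0 < sin u" using sin_pos_open[OF u0(1)] by auto
          have "\<bar>ln (TT u)\<bar> * (1 + \<bar>ln (TT u)\<bar>) \<le> (1 + \<bar>ln (TT u)\<bar>) * (1 + \<bar>ln (TT u)\<bar>)"
            by (intro mult_right_mono) auto
          then have "sin u * \<bar>ln (TT u)\<bar> * (1 + \<bar>ln (TT u)\<bar>) \<le> sin u * (1 + \<bar>ln (TT u)\<bar>)\<^sup>2"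
            using sp by (simp add: power2_eq_square mult.assoc mult_left_mono)
          also have "\<dots> \<le> 50" using log_bound(2)[OF u0(3,4)] .
          finally have sb: "sin u * \<bar>ln (TT u)\<bar> * (1 + \<bar>ln (TT u)\<bar>) \<le> 50" .
          have "norm (- lam * of_real (sin u * ln (TT u)) * y u) = kk * (sin u * \<bar>ln (TT u)\<bar>) * norm (y u)"
            using sp by (simp add: kk_def norm_mult abs_mult)
          also have "\<dots> \<le> kk * (sin u * \<bar>ln (TT u)\<bar>) * (M * (1 + \<bar>ln (TT u)\<bar>))"
            using ybd[OF u0(2)] sp by (intro mult_left_mono) (auto simp: kk_def)
          also have "\<dots> = kk * M * (sin u * \<bar>ln (TT u)\<bar> * (1 + \<bar>ln (TT u)\<bar>))" by simp
          also have "\<dots> \<le> kk * M * 50" using sb M0 by (intro mult_left_mono) (auto simp: kk_def)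
          finally show "norm (- lam * of_real (sin u * ln (TT u)) * y u) \<le> kk * 50 * M" by simp
        qed
        have pos: "0 \<le> kk * 50 * M * t" using M0 t0 by (simp add: kk_def)
        have "U t \<le> K0 + 2 * (kk * 50 * M * c)"
          using nA nB pos norm_triangle_ineq3[of "A c" "A t"] norm_triangle_ineq3[of "z c" "z t"]
          unfolding U_def K0_def by (smt (verit) norm_minus_commute)
        also have "2 * (kk * 50 * M * c) = M * (100 * kk * c)" by simp
        also have "\<dots> \<le> M * (1/2)" using c(4) M0 by (intro mult_left_mono) auto
        finally show "U t \<le> K0 + M / 2" by simp
      qed
    qed
    then show ?thesis using th by (auto simp: U_def)
  qed
  show ?thesis
  proof (intro bexI)
    show "c \<in> {0<..<pi}" using c by auto
    show "L2_sin y 0 c"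
    proof (rule L2_from_bound[where m = "1/4" and C = "10 * K0"])
      show "0 < c" "c \<le> pi/2" "0 \<le> (1/4::real)" "(1/4::real) < 1" using c by auto
      show "continuous_on {0<..<c} y" by (rule sol_cont[OF sol]) (use c in auto)
      fix t assume t: "0 < t" "t < c"
      then have t0: "0 < t" "t \<le> pi/2" using c by auto
      have "y t = A t + z t * L t" by (simp add: A_def)
      then have "norm (y t) \<le> norm (A t) + norm (z t) * \<bar>ln (TT t)\<bar>"
        by (metis L_def norm_mult norm_of_real norm_triangle_ineq)
      also have "\<dots> \<le> (norm (A t) + norm (z t)) * (1 + \<bar>ln (TT t)\<bar>)"
        by (simp add: algebra_simps mult_left_mono)
      also have "\<dots> \<le> (2 * K0) * (5 * TT t powr (-1/4))"
        using main[of t] t log_bound(1)[OF t0] by (intro mult_mono) (auto simp: K0_def)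
      finally show "norm (y t) \<le> 10 * K0 * TT t powr (- (1/4))" by simp
    qed
  qed
qed



lemma lower_bound:
  assumes sol: "sol m lam y z" and m: "1 \<le> m"
    and c: "0 < c" "c \<le> pi/2" "norm (lam / (2 * of_real m)) * c \<le> 1/8"
    and Ac: "of_real (TT c powr (-m)) * (of_real m * y c + z c) / (2 * of_real m) = 0"
    and Bc: "of_real (TT c powr m) * (of_real m * y c - z c) / (2 * of_real m) = 1"
    and th: "0 < th" "th \<le> c"
  shows "1/2 \<le> norm (y th) * TT th powr m"
proof -
  have m0: "0 < m" using m by simp
  define k where "k = lam / (2 * of_real m)"
  define kk where "kk = norm k"
  define A where "A = (\<lambda>t. of_real (TT t powr (-m)) * (of_real m * y t + z t) / (2 * of_real m))"
  define B where "B = (\<lambda>t. of_real (TT t powr m) * (of_real m * y t - z t) / (2 * of_real m))"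
  have Ac': "A c = 0" using Ac by (simp add: A_def)
  have Bc': "B c = 1" using Bc by (simp add: B_def)
  have kkc: "kk * c \<le> 1/8" using c(3) by (simp add: kk_def k_def)
  have kk0: "0 \<le> kk" by (simp add: kk_def)
  have dA: "(A has_vector_derivative (k * of_real (sin t * TT t powr (-m)) * y t)) (at t)"
    if "t \<in> {0<..<pi}" for t
    using sol_AB(1)[OF sol m0 that] unfolding A_def k_def .
  have dB: "(B has_vector_derivative (- k * of_real (sin t * TT t powr m) * y t)) (at t)"
    if "t \<in> {0<..<pi}" for t
    using sol_AB(2)[OF sol m0 that] unfolding B_def k_def .
  define U where "U t = norm (y t) * TT t powr m" for t
  have sub: "{th..c} \<subseteq> {0<..<pi}" using th c by auto
  have Urep: "U t = norm (of_real (TT t powr m * TT t powr m) * A t + B t)"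
    and Tinv: "TT t powr m * TT t powr (-m) = 1"
    if "t \<in> {th..c}" for t
  proof -
    have t0: "0 < t" "t < pi" using that th c by auto
    have Tp: "0 < TT t" using TT_pos t0 by auto
    show e: "TT t powr m * TT t powr (-m) = 1" using Tp by (simp add: powr_add[symmetric])
    have yrec: "y t = of_real (TT t powr m) * A t + of_real (TT t powr (-m)) * B t"
      using AB_recombine[OF m0, of t y z] t0 unfolding A_def B_def by simp
    have "(of_real (TT t powr m) :: complex) * of_real (TT t powr (-m)) = 1"
      using e by (simp only: of_real_mult[symmetric]) simp
    then have "of_real (TT t powr m) * y t = of_real (TT t powr m * TT t powr m) * A t + B t"
      unfolding yrec by (simp add: algebra_simps)
    moreover have "U t = norm (of_real (TT t powr m) * y t)"
      unfolding U_def by (simp add: norm_mult mult.commute)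
    ultimately show "U t = norm (of_real (TT t powr m * TT t powr m) * A t + B t)" by simp
  qed
  have est: "norm (B t - 1) \<le> kk * M * c \<and> TT t powr m * TT t powr m * norm (A t) \<le> kk * M * c"
    if HM: "\<forall>u\<in>{th..c}. U u \<le> M" and M0: "0 \<le> M" and t: "t \<in> {th..c}" for M t
  proof
    have t0: "0 < t" "t < pi" "t \<le> c" using t th c by auto
    have nB: "norm (B c - B t) \<le> kk * M * c - kk * M * t"
    proof (rule mv_compare[where g = "\<lambda>_. kk * M"])
      show "t \<le> c" using t0 by simp
      fix u assume u: "t \<le> u" "u \<le> c"
      then have u0: "u \<in> {0<..<pi}" "u \<in> {th..c}" using t0 c t by auto
      show "(B has_vector_derivative (- k * of_real (sin u * TT u powr m) * y u)) (at u)"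
        by (rule dB[OF u0(1)])
      show "((\<lambda>u. kk * M * u) has_real_derivative kk * M) (at u)"
        by (auto intro!: derivative_eq_intros)
      have sp: "0 < sin u" "sin u \<le> 1" using sin_pos_open[OF u0(1)] by auto
      have "norm (- k * of_real (sin u * TT u powr m) * y u) = kk * (sin u * U u)"
        using sp by (simp add: kk_def U_def norm_mult abs_mult)
      also have "\<dots> \<le> kk * (1 * M)"
        using sp HM u0(2) by (intro mult_left_mono mult_mono) (auto simp: kk_def U_def)
      finally show "norm (- k * of_real (sin u * TT u powr m) * y u) \<le> kk * M" by simp
    qed
    then show "norm (B t - 1) \<le> kk * M * c"
      using Bc' t0 kk0 M0 by (simp add: norm_minus_commute) (smt (verit) mult_nonneg_nonneg)
    have Tp: "0 < TT t" using TT_pos t0 by auto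
    define Q where "Q = TT t powr (-m) * TT t powr (-m)"
    have nA: "norm (A c - A t) \<le> kk * M * Q * c - kk * M * Q * t"
    proof (rule mv_compare[where g = "\<lambda>_. kk * M * Q"])
      show "t \<le> c" using t0 by simp
      fix u assume u: "t \<le> u" "u \<le> c"
      then have u0: "u \<in> {0<..<pi}" "u \<in> {th..c}" using t0 c t by auto
      show "(A has_vector_derivative (k * of_real (sin u * TT u powr (-m)) * y u)) (at u)"
        by (rule dA[OF u0(1)])
      show "((\<lambda>u. kk * M * Q * u) has_real_derivative kk * M * Q) (at u)"
        by (auto intro!: derivative_eq_intros)
      have sp: "0 < sin u" "sin u \<le> 1" using sin_pos_open[OF u0(1)] by auto
      have Tpu: "0 < TT u" using TT_pos u0 by auto
      have Tmono: "TT u powr (-m) \<le> TT t powr (-m)"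
        using TT_mono[of t u] u0 t0 u Tp m0 by (intro powr_mono2') auto
      have yU: "norm (y u) = U u * TT u powr (-m)"
      proof -
        have "TT u powr m * TT u powr (-m) = 1" using Tpu by (simp add: powr_add[symmetric])
        then show ?thesis unfolding U_def by (metis mult.assoc mult.right_neutral)
      qed
      have "norm (k * of_real (sin u * TT u powr (-m)) * y u) = kk * sin u * (TT u powr (-m) * TT u powr (-m)) * U u"
        using sp by (simp add: kk_def norm_mult abs_mult yU mult_ac)
      also have "\<dots> \<le> kk * 1 * (TT t powr (-m) * TT t powr (-m)) * M"
        using sp HM u0(2) Tmono kk0 M0
        by (intro mult_mono mult_left_mono) (auto simp: U_def)
      finally show "norm (k * of_real (sin u * TT u powr (-m)) * y u) \<le> kk * M * Q" by (simp add: Q_def mult_ac)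
    qed
    have Q0: "0 \<le> Q" by (simp add: Q_def)
    have "norm (A t) \<le> kk * M * Q * c"
      using nA Ac' t0 kk0 M0 Q0 by (simp add: norm_minus_commute) (smt (verit) mult_nonneg_nonneg)
    then have "TT t powr m * TT t powr m * norm (A t) \<le> TT t powr m * TT t powr m * (kk * M * Q * c)"
      by (intro mult_left_mono) auto
    also have "\<dots> = (TT t powr m * TT t powr (-m)) * (TT t powr m * TT t powr (-m)) * (kk * M * c)"
      by (simp add: Q_def algebra_simps)
    also have "\<dots> = kk * M * c" using Tinv[OF t] by simp
    finally show "TT t powr m * TT t powr m * norm (A t) \<le> kk * M * c" .
  qed
  have bd2: "\<forall>t\<in>{th..c}. U t \<le> 2 * 1"
  proof (rule bootstrap)
    show "th \<le> c" using th by simp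
    have "\<forall>x\<in>{th..c}. TT x \<noteq> 0" using sub TT_pos by force
    then show "continuous_on {th..c} U" unfolding U_def
      by (intro continuous_intros sol_cont[OF sol sub] TT_cont_open[OF sub]) auto
    fix M assume HM: "\<forall>t\<in>{th..c}. U t \<le> M"
    have "U th \<le> M" using HM th by auto
    moreover have "0 \<le> U th" by (simp add: U_def)
    ultimately have M0: "0 \<le> M" by linarith
    show "\<forall>t\<in>{th..c}. U t \<le> 1 + M / 2"
    proof
      fix t assume t: "t \<in> {th..c}"
      note e = est[OF HM M0 t]
      have nBt: "norm (B t) \<le> 1 + kk * M * c" using e norm_triangle_ineq2[of "B t" 1] by simp
      have "U t \<le> norm (of_real (TT t powr m * TT t powr m) * A t) + norm (B t)"
        unfolding Urep[OF t] by (rule norm_triangle_ineq)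
      also have "\<dots> \<le> TT t powr m * TT t powr m * norm (A t) + (1 + kk * M * c)"
        using nBt by (simp add: norm_mult)
      also have "\<dots> \<le> 1 + 2 * (kk * c) * M" using e by (simp add: mult_ac)
      also have "\<dots> \<le> 1 + 2 * (1/8) * M" using kkc M0 by (intro add_left_mono mult_right_mono) auto
      finally show "U t \<le> 1 + M / 2" using M0 by simp
    qed
  qed
  have th': "th \<in> {th..c}" using th by auto
  note e = est[OF bd2 _ th', simplified]
  have k2: "kk * 2 * c \<le> 1/4" using kkc by simp
  have "norm (B th - 1) \<le> 1/4" using e k2 by linarith
  then have "3/4 \<le> norm (B th)" using norm_triangle_ineq2[of 1 "B th"] by (simp add: norm_minus_commute)
  moreover have "TT th powr m * TT th powr m * norm (A th) \<le> 1/4" using e k2 by linarith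
  moreover have "norm (B th) - norm (of_real (TT th powr m * TT th powr m) * A th) \<le> U th"
    unfolding Urep[OF th'] by (metis add.commute norm_diff_ineq)
  ultimately show ?thesis unfolding U_def by (simp add: norm_mult)
qed



fun cs :: "real \<Rightarrow> complex \<Rightarrow> complex \<Rightarrow> complex \<Rightarrow> nat \<Rightarrow> complex" where
  "cs m lam a0 a1 0 = a0"
| "cs m lam a0 a1 (Suc 0) = a1"
| "cs m lam a0 a1 (Suc (Suc k)) = cs m lam a0 a1 k *
     (((of_nat k + of_real m) * (of_nat k + of_real m + 1) + lam) / ((of_nat k + 1) * (of_nat k + 2)))"

lemma summable_step2:
  fixes f :: "nat \<Rightarrow> real"
  assumes f0: "\<And>k. 0 \<le> f k" and st: "\<And>k. K \<le> k \<Longrightarrow> f (Suc (Suc k)) \<le> q * f k" and q: "q < 1"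
  shows "summable f"
proof -
  define q' where "q' = max q (1/4)"
  have q': "0 < q'" "q' < 1" "q \<le> q'" using q by (auto simp: q'_def)
  define s where "s = sqrt q'"
  have s: "0 < s" "s < 1" "s * s = q'" using q' by (auto simp: s_def)
  have st': "f (Suc (Suc k)) \<le> q' * f k" if "K \<le> k" for k
    using st[OF that] q'(3) f0[of k] by (meson mult_right_mono order_trans)
  define C where "C = max (f K / s ^ K) (f (Suc K) / s ^ Suc K)"
  have P: "f (K + j) \<le> C * s ^ (K + j) \<and> f (Suc (K + j)) \<le> C * s ^ Suc (K + j)" for j
  proof (induction j)
    case 0
    have "f K / s ^ K \<le> C" "f (Suc K) / s ^ Suc K \<le> C" by (auto simp: C_def)
    then show ?case using s by (simp add: pos_divide_le_eq del: power_Suc)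
  next
    case (Suc j)
    have "f (Suc (Suc (K + j))) \<le> q' * f (K + j)" by (rule st') simp
    also have "\<dots> \<le> q' * (C * s ^ (K + j))" using Suc.IH q' by (intro mult_left_mono) auto
    also have "\<dots> = C * s ^ Suc (Suc (K + j))"
    proof -
      have "s ^ Suc (Suc (K + j)) = s ^ (K + j) * (s * s)" by (simp add: mult_ac)
      then show ?thesis by (simp add: s(3)[symmetric] mult_ac)
    qed
    finally have h1: "f (Suc (Suc (K + j))) \<le> C * s ^ Suc (Suc (K + j))" .
    have eq: "K + Suc j = Suc (K + j)" by simp
    show ?case unfolding eq using Suc.IH h1 by blast
  qed
  have bd: "norm (f k) \<le> C * s ^ k" if "K \<le> k" for k
  proof -
    define j where "j = k - K"
    have j: "k = K + j" using that by (simp add: j_def)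
    have "f k \<le> C * s ^ k" using P[of j] unfolding j by blast
    then show ?thesis using f0[of k] by simp
  qed
  show ?thesis
  proof (rule summable_comparison_test')
    show "summable (\<lambda>k. C * s ^ k)" using s by (intro summable_mult summable_geometric) auto
    show "\<And>k. K \<le> k \<Longrightarrow> norm (f k) \<le> C * s ^ k" by (rule bd)
  qed
qed

lemma eventually_poly:
  fixes m L d :: real
  assumes "0 \<le> m" "0 \<le> L" "0 < d"
  shows "\<exists>K. \<forall>k\<ge>K. (real k + m) * (real k + m + 1) + L \<le> (1 + d) * ((real k + 1) * (real k + 2))"
proof -
  define D where "D = 2 * m + 1 + m * (m + 1) + L"
  have D0: "0 \<le> D" using assms by (simp add: D_def)
  define K where "K = max 1 (nat (ceiling (D / d)))"
  have "(real k + m) * (real k + m + 1) + L \<le> (1 + d) * ((real k + 1) * (real k + 2))" if k: "K \<le> k" for k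
  proof -
    have k1: "1 \<le> real k" using k by (simp add: K_def)
    have "D / d \<le> real k" using k unfolding K_def by (simp add: nat_le_iff ceiling_le_iff)
    then have Dk: "D \<le> d * real k" using assms(3) by (simp add: pos_divide_le_eq mult.commute)
    have nn: "0 \<le> (m * (m + 1) + L) * (real k - 1)" using k1 assms by (intro mult_nonneg_nonneg) auto
    have e0: "(m * (m + 1) + L) * (real k - 1) = (m * (m + 1) + L) * real k - (m * (m + 1) + L)"
      by (simp add: algebra_simps)
    have e00: "D * real k = (2 * m + 1) * real k + (m * (m + 1) + L) * real k"
      by (simp add: D_def algebra_simps)
    have "(2 * m + 1) * real k + m * (m + 1) + L \<le> D * real k"
      using nn e0 e00 by argo
    also have "\<dots> \<le> d * real k * real k" using Dk k1 by (intro mult_right_mono) auto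
    finally have "(2 * m + 1) * real k + m * (m + 1) + L \<le> d * real k * real k" .
    moreover have "0 \<le> d * (3 * real k + 2)" using assms by simp
    moreover have e1: "(real k + m) * (real k + m + 1) + L = real k * real k + ((2 * m + 1) * real k + m * (m + 1) + L)"
      by (simp add: algebra_simps)
    moreover have e2: "(1 + d) * ((real k + 1) * (real k + 2)) = real k * real k + (3 * real k + 2) + d * real k * real k + d * (3 * real k + 2)"
      by (simp add: algebra_simps)
    moreover have "0 \<le> 3 * real k + 2" by simp
    ultimately show ?thesis by (smt (verit))
  qed
  then show ?thesis by blast
qed

lemma cs_summable:
  assumes m: "0 \<le> m" and x: "norm x < 1"
  shows "summable (\<lambda>k. cs m lam a0 a1 k * x ^ k)"
proof (cases "x = 0")
  case True
  then show ?thesis using powser_sums_zero sums_summable by blast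
next
  case False
  define r where "r = norm x"
  have r: "0 < r" "r < 1" using False x by (auto simp: r_def)
  define d where "d = (1 - r\<^sup>2) / (2 * r\<^sup>2)"
  have r2: "0 < r\<^sup>2" "r\<^sup>2 < 1" using r by (auto simp: power_less_one_iff)
  have d: "0 < d" using r2 by (simp add: d_def)
  have qd: "(1 + d) * r\<^sup>2 = (1 + r\<^sup>2) / 2" using r2 by (simp add: d_def field_simps)
  obtain K where K: "\<And>k. K \<le> k \<Longrightarrow> (real k + m) * (real k + m + 1) + norm lam \<le> (1 + d) * ((real k + 1) * (real k + 2))"
    using eventually_poly[OF m norm_ge_zero d] by blast
  define f where "f k = norm (cs m lam a0 a1 k) * r ^ k" for k
  have "summable f"
  proof (rule summable_step2[where K = K and q = "(1 + r\<^sup>2) / 2"])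
    show "\<And>k. 0 \<le> f k" using r by (simp add: f_def)
    show "(1 + r\<^sup>2) / 2 < 1" using r2 by simp
    fix k assume k: "K \<le> k"
    define X where "X = (real k + m) * (real k + m + 1)"
    have X0: "0 \<le> X" using m by (simp add: X_def)
    define Y where "Y = (real k + 1) * (real k + 2)"
    have Y0: "0 < Y" by (simp add: Y_def)
    have e: "((of_nat k + of_real m) * (of_nat k + of_real m + 1) + lam) / ((of_nat k + 1) * (of_nat k + 2))
        = (of_real X + lam) / of_real Y" by (simp add: X_def Y_def)
    have "norm ((of_real X + lam) / of_real Y) \<le> (X + norm lam) / Y"
      using X0 Y0 by (simp add: norm_divide divide_right_mono norm_triangle_le)
    also have "\<dots> \<le> 1 + d" using K[OF k] Y0 by (simp add: X_def Y_def pos_divide_le_eq)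
    finally have rho: "norm ((of_real X + lam) / of_real Y) \<le> 1 + d" .
    have "f (Suc (Suc k)) = norm (cs m lam a0 a1 k) * norm ((of_real X + lam) / of_real Y) * r ^ Suc (Suc k)"
      by (simp add: f_def e norm_mult norm_divide)
    also have "\<dots> \<le> norm (cs m lam a0 a1 k) * (1 + d) * r ^ Suc (Suc k)"
      using rho r by (intro mult_right_mono mult_left_mono) auto
    also have "\<dots> = ((1 + d) * r\<^sup>2) * f k" by (simp add: f_def power2_eq_square algebra_simps)
    also have "\<dots> = (1 + r\<^sup>2) / 2 * f k" by (simp add: qd)
    finally show "f (Suc (Suc k)) \<le> (1 + r\<^sup>2) / 2 * f k" .
  qed
  then have "summable (\<lambda>k. norm (cs m lam a0 a1 k * x ^ k))"
    unfolding f_def[abs_def] r_def by (simp add: norm_mult norm_power)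
  then show ?thesis by (rule summable_norm_cancel)
qed



definition w0 :: "real \<Rightarrow> complex \<Rightarrow> complex \<Rightarrow> complex \<Rightarrow> complex \<Rightarrow> complex" where
  "w0 m lam a0 a1 x = (\<Sum>k. cs m lam a0 a1 k * x ^ k)"
definition w1 :: "real \<Rightarrow> complex \<Rightarrow> complex \<Rightarrow> complex \<Rightarrow> complex \<Rightarrow> complex" where
  "w1 m lam a0 a1 x = (\<Sum>k. diffs (cs m lam a0 a1) k * x ^ k)"
definition w2 :: "real \<Rightarrow> complex \<Rightarrow> complex \<Rightarrow> complex \<Rightarrow> complex \<Rightarrow> complex" where
  "w2 m lam a0 a1 x = (\<Sum>k. diffs (diffs (cs m lam a0 a1)) k * x ^ k)"

lemma cs_summable1:
  assumes "0 \<le> m" "norm x < 1"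
  shows "summable (\<lambda>k. diffs (cs m lam a0 a1) k * x ^ k)"
  by (rule termdiff_converges[where K = 1]) (use assms cs_summable in auto)

lemma cs_summable2:
  assumes "0 \<le> m" "norm x < 1"
  shows "summable (\<lambda>k. diffs (diffs (cs m lam a0 a1)) k * x ^ k)"
  by (rule termdiff_converges[where K = 1]) (use assms cs_summable1 in auto)

lemma w0_deriv:
  assumes "0 \<le> m" "norm x < 1"
  shows "(w0 m lam a0 a1 has_field_derivative w1 m lam a0 a1 x) (at x)"
  unfolding w0_def[abs_def] w1_def
  by (rule termdiffs_strong'[where K = 1]) (use assms cs_summable in auto)

lemma w1_deriv:
  assumes "0 \<le> m" "norm x < 1"
  shows "(w1 m lam a0 a1 has_field_derivative w2 m lam a0 a1 x) (at x)"
  unfolding w1_def[abs_def] w2_def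
  by (rule termdiffs_strong'[where K = 1]) (use assms cs_summable1 in auto)

lemma term_zero:
  fixes c :: "nat \<Rightarrow> complex"
  assumes rec: "c (Suc (Suc k)) = c k * (((of_nat k + of_real m) * (of_nat k + of_real m + 1) + lam) / ((of_nat k + 1) * (of_nat k + 2)))"
  shows "diffs (diffs c) k * x ^ k - of_nat k * (of_nat k - 1) * c k * x ^ k
         - 2 * (of_real m + 1) * (of_nat k * c k * x ^ k) - (of_real m * (of_real m + 1) + lam) * (c k * x ^ k) = 0"
proof -
  have nz: "((of_nat k + 1) * (of_nat k + 2) :: complex) \<noteq> 0"
    by (metis add_is_0 mult_eq_0_iff of_nat_Suc of_nat_eq_0_iff one_add_one zero_neq_numeral
        add.commute numeral_One numeral_plus_numeral of_nat_numeral zero_neq_one nat.distinct(1) of_nat_add)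
  have "diffs (diffs c) k = (of_nat k + 1) * (of_nat k + 2) * c (Suc (Suc k))"
    by (simp add: diffs_def algebra_simps)
  also have "\<dots> = c k * ((of_nat k + of_real m) * (of_nat k + of_real m + 1) + lam)"
    unfolding rec using nz by (simp add: field_simps)
  finally have d: "diffs (diffs c) k = c k * ((of_nat k + of_real m) * (of_nat k + of_real m + 1) + lam)" .
  show ?thesis unfolding d by (simp add: algebra_simps)
qed

lemma gegenbauer:
  assumes m: "0 \<le> m" and x: "norm x < 1"
  shows "(1 - x\<^sup>2) * w2 m lam a0 a1 x - 2 * (of_real m + 1) * x * w1 m lam a0 a1 x
         - (of_real m * (of_real m + 1) + lam) * w0 m lam a0 a1 x = 0"
proof -
  define c where "c = cs m lam a0 a1"
  have S0: "(\<lambda>k. c k * x ^ k) sums w0 m lam a0 a1 x"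
    unfolding c_def w0_def by (rule summable_sums[OF cs_summable[OF m x]])
  have S1: "(\<lambda>k. diffs c k * x ^ k) sums w1 m lam a0 a1 x"
    unfolding c_def w1_def by (rule summable_sums[OF cs_summable1[OF m x]])
  have S2: "(\<lambda>k. diffs (diffs c) k * x ^ k) sums w2 m lam a0 a1 x"
    unfolding c_def w2_def by (rule summable_sums[OF cs_summable2[OF m x]])
  define g where "g k = of_nat k * c k * x ^ k" for k
  have "(\<lambda>k. x * (diffs c k * x ^ k)) sums (x * w1 m lam a0 a1 x)" by (rule sums_mult[OF S1])
  moreover have "(\<lambda>k. x * (diffs c k * x ^ k)) = (\<lambda>k. g (Suc k))"
    by (simp add: g_def diffs_def fun_eq_iff algebra_simps)
  ultimately have "(\<lambda>k. g (Suc k)) sums (x * w1 m lam a0 a1 x)" by simp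
  then have T1: "g sums (x * w1 m lam a0 a1 x)" using sums_Suc_iff[of g] by (simp add: g_def[of 0])
  define g2 where "g2 k = of_nat k * diffs c k * x ^ k" for k
  have "(\<lambda>k. x * (diffs (diffs c) k * x ^ k)) sums (x * w2 m lam a0 a1 x)" by (rule sums_mult[OF S2])
  moreover have "(\<lambda>k. x * (diffs (diffs c) k * x ^ k)) = (\<lambda>k. g2 (Suc k))"
    by (simp add: g2_def diffs_def fun_eq_iff algebra_simps)
  ultimately have "(\<lambda>k. g2 (Suc k)) sums (x * w2 m lam a0 a1 x)" by simp
  then have T2: "g2 sums (x * w2 m lam a0 a1 x)" using sums_Suc_iff[of g2] by (simp add: g2_def[of 0])
  define h where "h k = of_nat k * (of_nat k - 1) * c k * x ^ k" for k
  have "(\<lambda>k. x * g2 k) sums (x * (x * w2 m lam a0 a1 x))" by (rule sums_mult[OF T2])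
  moreover have "(\<lambda>k. x * g2 k) = (\<lambda>k. h (Suc k))"
    by (simp add: g2_def h_def diffs_def fun_eq_iff algebra_simps)
  ultimately have "(\<lambda>k. h (Suc k)) sums (x * (x * w2 m lam a0 a1 x))" by simp
  then have T3: "h sums (x * (x * w2 m lam a0 a1 x))" using sums_Suc_iff[of h] by (simp add: h_def[of 0])
  have all: "(\<lambda>k. diffs (diffs c) k * x ^ k - h k - 2 * (of_real m + 1) * g k - (of_real m * (of_real m + 1) + lam) * (c k * x ^ k))
     sums (w2 m lam a0 a1 x - x * (x * w2 m lam a0 a1 x) - 2 * (of_real m + 1) * (x * w1 m lam a0 a1 x)
            - (of_real m * (of_real m + 1) + lam) * w0 m lam a0 a1 x)"
    by (intro sums_diff sums_mult S2 T3 T1 S0)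
  have z: "(\<lambda>k. diffs (diffs c) k * x ^ k - h k - 2 * (of_real m + 1) * g k - (of_real m * (of_real m + 1) + lam) * (c k * x ^ k)) = (\<lambda>k. 0)"
  proof
    fix k
    show "diffs (diffs c) k * x ^ k - h k - 2 * (of_real m + 1) * g k - (of_real m * (of_real m + 1) + lam) * (c k * x ^ k) = 0"
      unfolding h_def g_def by (rule term_zero) (simp add: c_def)
  qed
  have "w2 m lam a0 a1 x - x * (x * w2 m lam a0 a1 x) - 2 * (of_real m + 1) * (x * w1 m lam a0 a1 x)
            - (of_real m * (of_real m + 1) + lam) * w0 m lam a0 a1 x = 0"
    using all unfolding z by (rule sums_unique2[OF _ sums_zero])
  then show ?thesis by (simp add: algebra_simps power2_eq_square)
qed



lemma algZ:
  fixes P S C M L W0 W1 W2 :: complex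
  assumes S: "S \<noteq> 0" and SC: "S * S + C * C = 1"
    and G: "(1 - C * C) * W2 - 2 * (M + 1) * C * W1 - (M * (M + 1) + L) * W0 = 0"
  shows "P * (C * M / S) * (M * C * W0 - S * S * W1)
       + P * ((- M * S) * W0 + M * C * (- S * W1) - (2 * S * C * W1 + S * S * (- S * W2)))
       = (L * S + M * M / S) * (P * W0)"
proof -
  have G': "S * S * W2 = 2 * (M + 1) * C * W1 + (M * (M + 1) + L) * W0"
  proof -
    have e: "1 - C * C = S * S" using SC by (metis add_diff_cancel_right')
    have "S * S * W2 - (2 * (M + 1) * C * W1 + (M * (M + 1) + L) * W0) = 0"
      using G unfolding e by (simp add: diff_diff_eq)
    then show ?thesis by simp
  qed
  have "S * (P * (C * M / S) * (M * C * W0 - S * S * W1)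
       + P * ((- M * S) * W0 + M * C * (- S * W1) - (2 * S * C * W1 + S * S * (- S * W2))))
     = P * (C * M * (M * C * W0 - S * S * W1) + S * ((- M * S) * W0 + M * C * (- S * W1) - (2 * S * C * W1) + S * (S * S * W2)))"
    using S by (simp add: algebra_simps)
  also have "\<dots> = P * (C * M * (M * C * W0 - S * S * W1) + S * ((- M * S) * W0 + M * C * (- S * W1) - (2 * S * C * W1) + S * (2 * (M + 1) * C * W1 + (M * (M + 1) + L) * W0)))"
    unfolding G' ..
  also have "\<dots> = P * W0 * (M * M * (S * S + C * C) + L * S * S)"
    by (simp add: algebra_simps)
  also have "\<dots> = S * ((L * S + M * M / S) * (P * W0))"
    using S SC by (simp add: field_simps)
  finally show ?thesis using S by simp
qed

lemma algY:
  fixes P S C M W0 W1 :: complex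
  assumes S: "S \<noteq> 0"
  shows "P * (C * M / S) * W0 + P * (- S * W1) = P * (M * C * W0 - S * S * W1) / S"
  using S by (simp add: field_simps)

lemma wcomp_deriv:
  assumes "(f has_field_derivative f') (at (of_real (cos t)))"
  shows "((\<lambda>t. f (of_real (cos t))) has_vector_derivative (- of_real (sin t) * f')) (at t)"
proof -
  have d1: "(cos has_vector_derivative (- sin t)) (at t)"
    using DERIV_cos[of t] by (simp add: has_real_derivative_iff_has_vector_derivative)
  have d2: "((\<lambda>r. f (of_real r)) has_vector_derivative f') (at (cos t))"
    by (rule has_vector_derivative_real_field[OF assms])
  have "(((\<lambda>r. f (of_real r)) \<circ> cos) has_vector_derivative ((- sin t) *\<^sub>R f')) (at t)"
    by (rule vector_diff_chain_at[OF d1 d2])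
  then show ?thesis by (simp add: o_def scaleR_conv_of_real)
qed

lemma cos_norm_lt1: "t \<in> {0<..<pi} \<Longrightarrow> norm (complex_of_real (cos t)) < 1"
proof -
  assume t: "t \<in> {0<..<pi}"
  then have "0 < sin t" by (rule sin_pos_open)
  then have "cos t * cos t < 1" using sin_cos_squared_add3[of t] by (smt (verit) mult_pos_pos)
  then have "(cos t)\<^sup>2 < 1" by (simp add: power2_eq_square)
  then show ?thesis by (simp add: abs_square_less_1)
qed

lemma series_sol:
  assumes m: "0 < m"
  shows "sol m lam (\<lambda>t. of_real (sin t powr m) * w0 m lam a0 a1 (of_real (cos t)))
    (\<lambda>t. of_real (sin t powr m) * (of_real m * of_real (cos t) * w0 m lam a0 a1 (of_real (cos t))
         - of_real (sin t) * of_real (sin t) * w1 m lam a0 a1 (of_real (cos t))))"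
  unfolding sol_def
proof
  fix t :: real assume t: "t \<in> {0<..<pi}"
  have sp: "0 < sin t" using sin_pos_open[OF t] .
  have x1: "norm (complex_of_real (cos t)) < 1" by (rule cos_norm_lt1[OF t])
  have m0: "0 \<le> m" using m by simp
  define P where "P = (complex_of_real (sin t powr m))"
  define S where "S = (complex_of_real (sin t))"
  define C where "C = (complex_of_real (cos t))"
  define M where "M = (complex_of_real m)"
  define W0 where "W0 = w0 m lam a0 a1 C"
  define W1 where "W1 = w1 m lam a0 a1 C"
  define W2 where "W2 = w2 m lam a0 a1 C"
  have Sn: "S \<noteq> 0" using sp by (simp add: S_def)
  have SC: "S * S + C * C = 1"
  proof -
    have r: "sin t * sin t + cos t * cos t = 1" using sin_cos_squared_add[of t] by (simp add: power2_eq_square)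
    have "complex_of_real (sin t * sin t + cos t * cos t) = 1" unfolding r by simp
    then show ?thesis unfolding S_def C_def by simp
  qed
  have G: "(1 - C * C) * W2 - 2 * (M + 1) * C * W1 - (M * (M + 1) + lam) * W0 = 0"
    using gegenbauer[OF m0 x1, of lam a0 a1] by (simp add: C_def M_def W0_def W1_def W2_def power2_eq_square)
  have dPr: "((\<lambda>t. sin t powr m) has_real_derivative (sin t powr m * (0 * ln (sin t) + cos t * m / sin t))) (at t)"
    by (rule DERIV_powr[OF DERIV_sin sp DERIV_const])
  have dP: "((\<lambda>t. complex_of_real (sin t powr m)) has_vector_derivative P * (C * M / S)) (at t)"
  proof -
    have d0: "((\<lambda>t. complex_of_real (sin t powr m)) has_vector_derivative
        complex_of_real (sin t powr m * (0 * ln (sin t) + cos t * m / sin t))) (at t)"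
      by (rule has_vector_derivative_of_real[OF dPr])
    then show ?thesis by (simp add: P_def C_def M_def S_def of_real_mult of_real_divide)
  qed
  have dW0: "((\<lambda>t. w0 m lam a0 a1 (of_real (cos t))) has_vector_derivative (- S * W1)) (at t)"
    unfolding S_def W1_def C_def by (rule wcomp_deriv[OF w0_deriv[OF m0 x1]])
  have dW1: "((\<lambda>t. w1 m lam a0 a1 (of_real (cos t))) has_vector_derivative (- S * W2)) (at t)"
    unfolding S_def W2_def C_def by (rule wcomp_deriv[OF w1_deriv[OF m0 x1]])
  have dC: "((\<lambda>t. complex_of_real (cos t)) has_vector_derivative (- S)) (at t)"
  proof -
    have "((\<lambda>t. complex_of_real (cos t)) has_vector_derivative complex_of_real (- sin t)) (at t)"
      by (rule has_vector_derivative_of_real[OF DERIV_cos])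
    then show ?thesis by (simp add: S_def)
  qed
  have dS: "((\<lambda>t. complex_of_real (sin t)) has_vector_derivative C) (at t)"
  proof -
    have "((\<lambda>t. complex_of_real (sin t)) has_vector_derivative complex_of_real (cos t)) (at t)"
      by (rule has_vector_derivative_of_real[OF DERIV_sin])
    then show ?thesis by (simp add: C_def)
  qed
  have dMC: "((\<lambda>t. M * complex_of_real (cos t)) has_vector_derivative (M * (- S))) (at t)"
    by (rule has_vector_derivative_mult_right[OF dC])
  have dSS: "((\<lambda>t. complex_of_real (sin t) * complex_of_real (sin t)) has_vector_derivative (S * C + C * S)) (at t)"
    using has_vector_derivative_mult[OF dS dS] by (simp add: S_def)
  have dQ: "((\<lambda>t. M * complex_of_real (cos t) * w0 m lam a0 a1 (of_real (cos t))
         - complex_of_real (sin t) * complex_of_real (sin t) * w1 m lam a0 a1 (of_real (cos t))) has_vector_derivative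
         ((M * C * (- S * W1) + M * (- S) * W0) - (S * S * (- S * W2) + (S * C + C * S) * W1))) (at t)"
    using has_vector_derivative_diff[OF has_vector_derivative_mult[OF dMC dW0] has_vector_derivative_mult[OF dSS dW1]]
    by (simp add: C_def S_def W0_def W1_def)
  note dZ = has_vector_derivative_mult[OF dP dQ]
  show "((\<lambda>t. complex_of_real (sin t powr m) * w0 m lam a0 a1 (complex_of_real (cos t))) has_vector_derivative
          (complex_of_real (sin t powr m) * (complex_of_real m * complex_of_real (cos t) * w0 m lam a0 a1 (complex_of_real (cos t))
           - complex_of_real (sin t) * complex_of_real (sin t) * w1 m lam a0 a1 (complex_of_real (cos t)))) / complex_of_real (sin t)) (at t) \<and>
        ((\<lambda>t. complex_of_real (sin t powr m) * (complex_of_real m * complex_of_real (cos t) * w0 m lam a0 a1 (complex_of_real (cos t))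
           - complex_of_real (sin t) * complex_of_real (sin t) * w1 m lam a0 a1 (complex_of_real (cos t)))) has_vector_derivative
          (lam * complex_of_real (sin t) + complex_of_real (m\<^sup>2 / sin t)) *
          (complex_of_real (sin t powr m) * w0 m lam a0 a1 (complex_of_real (cos t)))) (at t)"
  proof
    have "((\<lambda>t. complex_of_real (sin t powr m) * w0 m lam a0 a1 (complex_of_real (cos t))) has_vector_derivative
        (P * (- S * W1) + P * (C * M / S) * W0)) (at t)"
      using has_vector_derivative_mult[OF dP dW0] by (simp add: W0_def C_def P_def)
    moreover have "P * (- S * W1) + P * (C * M / S) * W0 = P * (M * C * W0 - S * S * W1) / S"
      using algY[OF Sn, of P C M W0 W1] by (simp add: add.commute)
    ultimately show "((\<lambda>t. complex_of_real (sin t powr m) * w0 m lam a0 a1 (complex_of_real (cos t))) has_vector_derivative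
          (complex_of_real (sin t powr m) * (complex_of_real m * complex_of_real (cos t) * w0 m lam a0 a1 (complex_of_real (cos t))
           - complex_of_real (sin t) * complex_of_real (sin t) * w1 m lam a0 a1 (complex_of_real (cos t)))) / complex_of_real (sin t)) (at t)"
      by (simp add: P_def M_def C_def S_def W0_def W1_def)
  next
    have "((\<lambda>t. complex_of_real (sin t powr m) * (M * complex_of_real (cos t) * w0 m lam a0 a1 (complex_of_real (cos t))
           - complex_of_real (sin t) * complex_of_real (sin t) * w1 m lam a0 a1 (complex_of_real (cos t)))) has_vector_derivative
          (P * ((- M * S) * W0 + M * C * (- S * W1) - (2 * S * C * W1 + S * S * (- S * W2)))
           + P * (C * M / S) * (M * C * W0 - S * S * W1))) (at t)"
    proof -
      have dZ': "((\<lambda>t. complex_of_real (sin t powr m) * (M * complex_of_real (cos t) * w0 m lam a0 a1 (complex_of_real (cos t))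
           - complex_of_real (sin t) * complex_of_real (sin t) * w1 m lam a0 a1 (complex_of_real (cos t)))) has_vector_derivative
          (P * ((M * C * (- S * W1) + M * (- S) * W0) - (S * S * (- S * W2) + (S * C + C * S) * W1))
           + P * (C * M / S) * (M * C * W0 - S * S * W1))) (at t)"
        using dZ unfolding P_def[symmetric] S_def[symmetric] C_def[symmetric] W0_def[symmetric] W1_def[symmetric] .
      have eqQ: "(M * C * (- S * W1) + M * (- S) * W0) - (S * S * (- S * W2) + (S * C + C * S) * W1)
           = (- M * S) * W0 + M * C * (- S * W1) - (2 * S * C * W1 + S * S * (- S * W2))"
        by (simp add: algebra_simps)
      show ?thesis using dZ' unfolding eqQ by (simp add: add.commute)
    qed
    moreover have "P * ((- M * S) * W0 + M * C * (- S * W1) - (2 * S * C * W1 + S * S * (- S * W2)))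
           + P * (C * M / S) * (M * C * W0 - S * S * W1) = (lam * S + M * M / S) * (P * W0)"
      using algZ[OF Sn SC G, of P] by (simp add: add.commute)
    ultimately show "((\<lambda>t. complex_of_real (sin t powr m) * (complex_of_real m * complex_of_real (cos t) * w0 m lam a0 a1 (complex_of_real (cos t))
           - complex_of_real (sin t) * complex_of_real (sin t) * w1 m lam a0 a1 (complex_of_real (cos t)))) has_vector_derivative
          (lam * complex_of_real (sin t) + complex_of_real (m\<^sup>2 / sin t)) *
          (complex_of_real (sin t powr m) * w0 m lam a0 a1 (complex_of_real (cos t)))) (at t)"
      by (simp add: P_def M_def C_def S_def W0_def power2_eq_square)
  qed
qed




lemma sol_lin:
  assumes "sol m lam y1 z1" "sol m lam y2 z2"
  shows "sol m lam (\<lambda>t. a * y1 t + b * y2 t) (\<lambda>t. a * z1 t + b * z2 t)"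
  unfolding sol_def
proof
  fix t :: real assume t: "t \<in> {0<..<pi}"
  from assms t have d1: "(y1 has_vector_derivative (z1 t / of_real (sin t))) (at t)"
     and d2: "(z1 has_vector_derivative ((lam * of_real (sin t) + of_real (m\<^sup>2 / sin t)) * y1 t)) (at t)"
     and d3: "(y2 has_vector_derivative (z2 t / of_real (sin t))) (at t)"
     and d4: "(z2 has_vector_derivative ((lam * of_real (sin t) + of_real (m\<^sup>2 / sin t)) * y2 t)) (at t)"
    unfolding sol_def by auto
  show "((\<lambda>t. a * y1 t + b * y2 t) has_vector_derivative (a * z1 t + b * z2 t) / of_real (sin t)) (at t) \<and>
        ((\<lambda>t. a * z1 t + b * z2 t) has_vector_derivative ((lam * of_real (sin t) + of_real (m\<^sup>2 / sin t)) * (a * y1 t + b * y2 t))) (at t)"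
  proof
    show "((\<lambda>t. a * y1 t + b * y2 t) has_vector_derivative (a * z1 t + b * z2 t) / of_real (sin t)) (at t)"
      by (rule hvd_eq[OF has_vector_derivative_add[OF has_vector_derivative_mult_right[OF d1] has_vector_derivative_mult_right[OF d3]]])
        (simp add: add_divide_distrib)
    show "((\<lambda>t. a * z1 t + b * z2 t) has_vector_derivative ((lam * of_real (sin t) + of_real (m\<^sup>2 / sin t)) * (a * y1 t + b * y2 t))) (at t)"
      by (rule hvd_eq[OF has_vector_derivative_add[OF has_vector_derivative_mult_right[OF d2] has_vector_derivative_mult_right[OF d4]]])
        (simp add: algebra_simps add_divide_distrib)
  qed
qed

lemma wronsk_deriv:
  assumes "sol m lam y1 z1" "sol m lam y2 z2" "t \<in> {0<..<pi}"
  shows "((\<lambda>t. y1 t * z2 t - z1 t * y2 t) has_vector_derivative 0) (at t)"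
proof -
  from assms have d1: "(y1 has_vector_derivative (z1 t / of_real (sin t))) (at t)"
     and d2: "(z1 has_vector_derivative ((lam * of_real (sin t) + of_real (m\<^sup>2 / sin t)) * y1 t)) (at t)"
     and d3: "(y2 has_vector_derivative (z2 t / of_real (sin t))) (at t)"
     and d4: "(z2 has_vector_derivative ((lam * of_real (sin t) + of_real (m\<^sup>2 / sin t)) * y2 t)) (at t)"
    unfolding sol_def by auto
  show ?thesis
    by (rule hvd_eq[OF has_vector_derivative_diff[OF has_vector_derivative_mult[OF d1 d4] has_vector_derivative_mult[OF d2 d3]]])
      (simp add: algebra_simps)
qed

lemma wronsk_const:
  assumes s1: "sol m lam y1 z1" and s2: "sol m lam y2 z2"
    and a: "a \<in> {0<..<pi}" and b: "b \<in> {0<..<pi}" and ab: "a \<le> b"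
  shows "y1 a * z2 a - z1 a * y2 a = y1 b * z2 b - z1 b * y2 b"
proof -
  have "norm ((y1 b * z2 b - z1 b * y2 b) - (y1 a * z2 a - z1 a * y2 a)) \<le> (\<lambda>_. 0::real) b - (\<lambda>_. 0::real) a"
  proof (rule mv_compare[where f' = "\<lambda>_. 0" and g = "\<lambda>_. 0"])
    show "a \<le> b" by fact
    fix x assume "a \<le> x" "x \<le> b"
    then have x: "x \<in> {0<..<pi}" using a b by auto
    show "((\<lambda>t. y1 t * z2 t - z1 t * y2 t) has_vector_derivative 0) (at x)"
      by (rule wronsk_deriv[OF s1 s2 x])
    show "((\<lambda>_. 0::real) has_real_derivative 0) (at x)" by simp
    show "norm (0::complex) \<le> 0" by simp
  qed
  then show ?thesis by simp
qed

lemma series_vals: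
  shows "of_real (sin (pi/2) powr m) * w0 m lam a0 a1 (of_real (cos (pi/2))) = a0"
    and "of_real (sin (pi/2) powr m) * (of_real m * of_real (cos (pi/2)) * w0 m lam a0 a1 (of_real (cos (pi/2)))
         - of_real (sin (pi/2)) * of_real (sin (pi/2)) * w1 m lam a0 a1 (of_real (cos (pi/2)))) = - a1"
proof -
  have w00: "w0 m lam a0 a1 0 = a0" unfolding w0_def using powser_zero[of "cs m lam a0 a1"] by simp
  have w10: "w1 m lam a0 a1 0 = a1" unfolding w1_def using powser_zero[of "diffs (cs m lam a0 a1)"]
    by (simp add: diffs_def)
  show "of_real (sin (pi/2) powr m) * w0 m lam a0 a1 (of_real (cos (pi/2))) = a0" using w00 by simp
  show "of_real (sin (pi/2) powr m) * (of_real m * of_real (cos (pi/2)) * w0 m lam a0 a1 (of_real (cos (pi/2)))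
         - of_real (sin (pi/2)) * of_real (sin (pi/2)) * w1 m lam a0 a1 (of_real (cos (pi/2)))) = - a1"
    using w10 by simp
qed

lemma exists_sol:
  assumes m: "0 < m" and c: "c \<in> {0<..<pi}"
  shows "\<exists>y z. sol m lam y z \<and> y c = Y0 \<and> z c = Z0"
proof -
  define Y1 where "Y1 = (\<lambda>t. of_real (sin t powr m) * w0 m lam 1 0 (of_real (cos t)))"
  define Z1 where "Z1 = (\<lambda>t. of_real (sin t powr m) * (of_real m * of_real (cos t) * w0 m lam 1 0 (of_real (cos t))
         - of_real (sin t) * of_real (sin t) * w1 m lam 1 0 (of_real (cos t))))"
  define Y2 where "Y2 = (\<lambda>t. of_real (sin t powr m) * w0 m lam 0 1 (of_real (cos t)))"
  define Z2 where "Z2 = (\<lambda>t. of_real (sin t powr m) * (of_real m * of_real (cos t) * w0 m lam 0 1 (of_real (cos t))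
         - of_real (sin t) * of_real (sin t) * w1 m lam 0 1 (of_real (cos t))))"
  have s1: "sol m lam Y1 Z1" unfolding Y1_def Z1_def by (rule series_sol[OF m])
  have s2: "sol m lam Y2 Z2" unfolding Y2_def Z2_def by (rule series_sol[OF m])
  have v: "Y1 (pi/2) = 1" "Z1 (pi/2) = 0" "Y2 (pi/2) = 0" "Z2 (pi/2) = -1"
    unfolding Y1_def Z1_def Y2_def Z2_def using series_vals[of m lam] by simp_all
  have hp: "pi/2 \<in> {0<..<pi::real}" by auto
  have Wc: "Y1 c * Z2 c - Z1 c * Y2 c = -1"
  proof (cases "c \<le> pi/2")
    case True
    then show ?thesis using wronsk_const[OF s1 s2 c hp] v by simp
  next
    case False
    then show ?thesis using wronsk_const[OF s1 s2 hp c] v by simp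
  qed
  define al where "al = - (Y0 * Z2 c - Z0 * Y2 c)"
  define be where "be = - (Y1 c * Z0 - Z1 c * Y0)"
  have "sol m lam (\<lambda>t. al * Y1 t + be * Y2 t) (\<lambda>t. al * Z1 t + be * Z2 t)"
    by (rule sol_lin[OF s1 s2])
  moreover have "al * Y1 c + be * Y2 c = Y0"
  proof -
    have "al * Y1 c + be * Y2 c = - Y0 * (Y1 c * Z2 c - Z1 c * Y2 c)"
      by (simp add: al_def be_def algebra_simps)
    then show ?thesis using Wc by simp
  qed
  moreover have "al * Z1 c + be * Z2 c = Z0"
  proof -
    have "al * Z1 c + be * Z2 c = - Z0 * (Y1 c * Z2 c - Z1 c * Y2 c)"
      by (simp add: al_def be_def algebra_simps)
    then show ?thesis using Wc by simp
  qed
  ultimately show ?thesis by blast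
qed



lemma not_L2:
  fixes y :: "real \<Rightarrow> complex"
  assumes m: "1 \<le> m" and d: "0 < d" "d \<le> pi/2"
    and bd: "\<And>t. 0 < t \<Longrightarrow> t \<le> d \<Longrightarrow> 1/2 \<le> norm (y t) * TT t powr m"
  shows "\<not> ((\<lambda>t. (cmod (y t))\<^sup>2 * sin t) integrable_on {0..d})"
proof
  define f where "f t = (cmod (y t))\<^sup>2 * sin t" for t
  assume "(\<lambda>t. (cmod (y t))\<^sup>2 * sin t) integrable_on {0..d}"
  then have fi: "f integrable_on {0..d}" unfolding f_def[abs_def] .
  define I where "I = integral {0..d} f"
  have f0: "\<forall>t\<in>{0..d}. 0 \<le> f t"
  proof
    fix t assume "t \<in> {0..d}"
    then have "0 \<le> sin t" using d by (intro sin_ge_zero) auto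
    then show "0 \<le> f t" by (simp add: f_def)
  qed
  have lowI: "(1/4) * (ln (TT d) - ln (TT ep)) \<le> I" if ep: "0 < ep" "ep < d" for ep
  proof -
    have sub: "{ep..d} \<subseteq> {0..d}" using ep by auto
    have fi2: "f integrable_on {ep..d}" by (rule integrable_on_subinterval[OF fi sub])
    have gint: "((\<lambda>t. (1/4) * (1 / sin t)) has_integral ((1/4) * ln (TT d) - (1/4) * ln (TT ep))) {ep..d}"
    proof (rule fundamental_theorem_of_calculus_interior)
      show "ep \<le> d" using ep by simp
      have "\<forall>t\<in>{ep..d}. isCont (\<lambda>t. (1/4) * ln (TT t)) t"
      proof
        fix t assume "t \<in> {ep..d}"
        then have "0 < t" "t < pi" using ep d by auto
        then show "isCont (\<lambda>t. (1/4) * ln (TT t)) t"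
          by (rule DERIV_isCont[OF DERIV_cmult[OF TT_ln_deriv]])
      qed
      then show "continuous_on {ep..d} (\<lambda>t. (1/4) * ln (TT t))"
        by (intro continuous_at_imp_continuous_on) auto
      fix t assume "t \<in> {ep<..<d}"
      then have "0 < t" "t < pi" using ep d by auto
      then show "((\<lambda>t. (1/4) * ln (TT t)) has_vector_derivative (1/4) * (1 / sin t)) (at t)"
        unfolding has_real_derivative_iff_has_vector_derivative[symmetric]
        by (intro DERIV_cmult TT_ln_deriv)
    qed
    have "(1/4) * (ln (TT d) - ln (TT ep)) = integral {ep..d} (\<lambda>t. (1/4) * (1 / sin t))"
      using gint by (simp add: integral_unique algebra_simps)
    also have "\<dots> \<le> integral {ep..d} f"
    proof (rule integral_le)
      show "(\<lambda>t. (1/4) * (1 / sin t)) integrable_on {ep..d}" using gint by blast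
      show "f integrable_on {ep..d}" by fact
      fix t assume t: "t \<in> {ep..d}"
      then have t0: "0 < t" "t \<le> pi/2" "t < pi" "t \<le> d" using ep d by auto
      have sp: "0 < sin t" using t0 by (intro sin_gt_zero) auto
      have Tp: "0 < TT t" using TT_pos t0 by auto
      have T1: "TT t \<le> 1" using TT_le_1 t0 by auto
      have Ts: "TT t \<le> sin t" using TT_le_sin t0 by auto
      have "(1/2)\<^sup>2 \<le> (norm (y t) * TT t powr m)\<^sup>2"
        using bd[OF t0(1,4)] by (intro power_mono) auto
      also have "\<dots> = (norm (y t))\<^sup>2 * (TT t powr m * TT t powr m)"
        by (simp add: power2_eq_square)
      also have "TT t powr m * TT t powr m = TT t powr (2 * m)"
        by (simp add: powr_add[symmetric])
      also have "TT t powr (2 * m) \<le> TT t powr 2"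
        using m Tp T1 by (intro powr_mono') auto
      also have "TT t powr 2 = (TT t)\<^sup>2" using Tp by simp
      also have "(TT t)\<^sup>2 \<le> (sin t)\<^sup>2" using Ts Tp by (intro power_mono) auto
      finally have "1/4 \<le> (norm (y t))\<^sup>2 * (sin t)\<^sup>2"
        by (simp add: mult_left_mono power2_eq_square)
      then show "(1/4) * (1 / sin t) \<le> f t"
        using sp by (simp add: f_def field_simps power2_eq_square)
    qed
    also have "\<dots> \<le> I"
      unfolding I_def by (rule integral_subset_le[OF sub fi2 fi f0])
    finally show ?thesis .
  qed
  define x where "x = exp (ln (TT d) - 4 * \<bar>I\<bar> - 4)"
  have Tdp: "0 < TT d" using TT_pos d by auto
  have x0: "0 < x" by (simp add: x_def)
  have xd: "x < TT d"
  proof -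
    have "x < exp (ln (TT d))" unfolding x_def by simp
    then show ?thesis using Tdp by simp
  qed
  define ep where "ep = 2 * arctan x"
  have ep0: "0 < ep" using x0 by (simp add: ep_def)
  have "arctan x < arctan (TT d)" using xd by (simp add: arctan_less_iff)
  also have "arctan (TT d) = d / 2" unfolding TT_def using d by (intro arctan_tan) auto
  finally have epd: "ep < d" by (simp add: ep_def)
  have "TT ep = x" by (simp add: ep_def TT_def tan_arctan)
  then have "ln (TT ep) = ln (TT d) - 4 * \<bar>I\<bar> - 4" using x0 by (simp add: x_def)
  then have "(1/4) * (ln (TT d) - ln (TT ep)) = \<bar>I\<bar> + 1" by simp
  then show False using lowI[OF ep0 epd] by simp
qed

lemma not_LC0:
  assumes n: "1 \<le> \<bar>n\<bar>"
  shows "\<not> LC_at_0 n chi"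
proof
  assume LC: "LC_at_0 n chi"
  define m where "m = \<bar>n\<bar>"
  have m: "1 \<le> m" "0 < m" using n by (auto simp: m_def)
  define lam where "lam = chi - of_real (n * (n + 1))"
  define kk where "kk = norm (lam / (2 * of_real m))"
  define c where "c = 1 / (8 * kk + 1)"
  have kp: "0 < 8 * kk + 1" by (simp add: kk_def add_nonneg_pos)
  have c: "0 < c" "c \<le> pi/2" "kk * c \<le> 1/8"
  proof -
    show "0 < c" using kp by (simp add: c_def)
    have "c \<le> 1" using kp by (simp add: c_def kk_def)
    then show "c \<le> pi/2" using pi_gt3 by linarith
    have "kk * c = kk / (8 * kk + 1)" by (simp add: c_def)
    also have "\<dots> \<le> 1/8" using kp by (simp add: pos_divide_le_eq)
    finally show "kk * c \<le> 1/8" .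
  qed
  have cin: "c \<in> {0<..<pi}" using c pi_gt3 by auto
  obtain y z where sol: "sol m lam y z" and yc: "y c = of_real (TT c powr (-m))"
    and zc: "z c = - of_real m * of_real (TT c powr (-m))"
    using exists_sol[OF m(2) cin] by blast
  have Tcp: "0 < TT c" using TT_pos cin by auto
  have mn: "(of_real m :: complex) \<noteq> 0" using m by simp
  have Ac: "of_real (TT c powr (-m)) * (of_real m * y c + z c) / (2 * of_real m) = 0"
    unfolding yc zc by simp
  have Bc: "of_real (TT c powr m) * (of_real m * y c - z c) / (2 * of_real m) = 1"
  proof -
    have e: "TT c powr m * TT c powr (-m) = 1" using Tcp by (simp add: powr_add[symmetric])
    have "of_real (TT c powr m) * (of_real m * y c - z c) / (2 * of_real m)
        = of_real (TT c powr m * TT c powr (-m)) * (2 * of_real m) / (2 * of_real m)"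
      unfolding yc zc by (simp add: algebra_simps)
    also have "\<dots> = 1" using e mn by simp
    finally show ?thesis .
  qed
  have leg: "legendre_sol n chi y"
    by (rule sol_to_legendre) (use sol in \<open>simp add: m_def lam_def\<close>)
  then obtain c' where c': "c' \<in> {0<..<pi}" "L2_sin y 0 c'"
    using LC unfolding LC_at_0_def by blast
  define d where "d = min c c'"
  have d: "0 < d" "d \<le> pi/2" "d \<le> c" "d \<le> c'" using c c' by (auto simp: d_def)
  have "(\<lambda>t. (cmod (y t))\<^sup>2 * sin t) integrable_on {0..c'}"
    using c' unfolding L2_sin_def by (simp add: integrable_on_open_interval_real)
  then have "(\<lambda>t. (cmod (y t))\<^sup>2 * sin t) integrable_on {0..d}"
    by (rule integrable_on_subinterval) (use d in auto)
  moreover have "\<not> ((\<lambda>t. (cmod (y t))\<^sup>2 * sin t) integrable_on {0..d})"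
  proof (rule not_L2[OF m(1) d(1,2)])
    fix t assume "0 < t" "t \<le> d"
    then show "1/2 \<le> norm (y t) * TT t powr m"
      using lower_bound[OF sol m(1) c(1,2) _ Ac Bc, of t] c(3) d by (auto simp: kk_def)
  qed
  ultimately show False by blast
qed



lemma L2_reflect:
  assumes "L2_sin (\<lambda>t. y (pi - t)) 0 c" "0 < c"
  shows "L2_sin y (pi - c) pi"
proof -
  define h where "h t = (cmod (y (pi - t)))\<^sup>2 * sin t" for t
  have "h integrable_on {0..c}"
    using assms(1) unfolding L2_sin_def h_def[abs_def] by (simp add: integrable_on_open_interval_real)
  then have "(\<lambda>x. h ((-1) *\<^sub>R x + pi)) integrable_on ((\<lambda>x. (1 / (-1)) *\<^sub>R x + - ((1 / (-1)) *\<^sub>R pi)) ` cbox 0 c)"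
    by (intro integrable_affinity) auto
  moreover have "(\<lambda>x. h ((-1) *\<^sub>R x + pi)) = (\<lambda>t. (cmod (y t))\<^sup>2 * sin t)"
    by (simp add: h_def fun_eq_iff)
  moreover have "((\<lambda>x. (1 / (-1)) *\<^sub>R x + - ((1 / (-1)) *\<^sub>R pi)) ` cbox 0 c) = {pi - c..pi}"
  proof -
    have "((\<lambda>x. (1 / (-1)) *\<^sub>R x + - ((1 / (-1)) *\<^sub>R pi)) ` cbox 0 c) = (\<lambda>x. (-1) * x + pi) ` {0..c}"
      by simp
    also have "\<dots> = {pi - c..pi}" using assms(2) by (simp add: image_affinity_atLeastAtMost)
    finally show ?thesis .
  qed
  ultimately show ?thesis unfolding L2_sin_def by (simp add: integrable_on_open_interval_real)
qed

theorem proposition5p1: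
  fixes n :: real and chi :: complex
  shows "LC n chi \<longleftrightarrow> n \<in> {-1<..<1}"
proof
  assume "LC n chi"
  then have "LC_at_0 n chi" by (simp add: LC_def)
  then have "\<not> 1 \<le> \<bar>n\<bar>" using not_LC0 by blast
  then show "n \<in> {-1<..<1}" by auto
next
  assume "n \<in> {-1<..<1}"
  then have n1: "\<bar>n\<bar> < 1" by auto
  define lam where "lam = chi - of_real (n * (n + 1))"
  have up: "\<exists>c\<in>{0<..<pi}. L2_sin y 0 c" if "sol \<bar>n\<bar> lam y z" for y z
  proof (cases "n = 0")
    case True
    then show ?thesis using upper_zero[of lam y z] that by simp
  next
    case False
    then show ?thesis using upper_pos[OF that _ n1] by simp
  qed
  have "LC_at_0 n chi" unfolding LC_at_0_def
  proof (intro allI impI)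
    fix y assume "legendre_sol n chi y"
    then obtain z where "sol \<bar>n\<bar> lam y z" using legendre_to_sol unfolding lam_def by blast
    then show "\<exists>c\<in>{0<..<pi}. L2_sin y 0 c" by (rule up)
  qed
  moreover have "LC_at_pi n chi" unfolding LC_at_pi_def
  proof (intro allI impI)
    fix y assume "legendre_sol n chi y"
    then obtain z where "sol \<bar>n\<bar> lam y z" using legendre_to_sol unfolding lam_def by blast
    then have "sol \<bar>n\<bar> lam (\<lambda>t. y (pi - t)) (\<lambda>t. - z (pi - t))" by (rule sol_reflect)
    then obtain c where c: "c \<in> {0<..<pi}" "L2_sin (\<lambda>t. y (pi - t)) 0 c" using up by blast
    then have "L2_sin y (pi - c) pi" by (intro L2_reflect) auto
    moreover have "pi - c \<in> {0<..<pi}" using c by auto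
    ultimately show "\<exists>c\<in>{0<..<pi}. L2_sin y c pi" by blast
  qed
  ultimately show "LC n chi" by (simp add: LC_def)
qed


end
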